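(* Let $s>2$ be an integer, $A_s=\{0,1,\dots,s-1\}$, and let $A_0,A_1$ be disjoint subsets of $A_s$ with $A_0\cup A_1=A_s$, $A_0\neq A_s\neq A_1$. Let $f:[0,1]\to[0,1]$ be defined by $$f\big(\Delta^{s*}_{\alpha_1\alpha_2\dots\alpha_n\dots}\big)=\Delta^{2*}_{\beta_1\beta_2\dots\beta_n\dots},$$ where $\beta_1=0$ if $\alpha_1\in A_0$, $\beta_1=1$ if $\alpha_1\in A_1$, and for $n\ge 1$, $\beta_{n+1}=\beta_n$ if $\alpha_{n+1}=\alpha_n$ and $\beta_{n+1}=1-\beta_n$ if $\alpha_{n+1}\neq\alpha_n$. Then $f$ is continuous on $[0,1]$ and has unbounded (infinite) total variation on $[0,1]$.
   Context: $L_s=A_s\times A_s\times\cdots$ denotes the space of sequences $(\alpha_n)$ with $\alpha_n\in A_s$. The $s*$-representation is an encoding of $[0,1]$ topologically equivalent to the classical $s$-adic one: there is a continuous strictly monotone surjection $h_s:[0,1]\to[0,1]$ such that $\Delta^{s*}_{\alpha_1\alpha_2\dots}=h_s\big(\sum_{n\ge1}\alpha_n s^{-n}\big)$ for every $(\alpha_n)\in L_s$. Likewise the $2*$-representation is given by a continuous strictly monotone surjection $h_2:[0,1]\to[0,1]$ via $\Delta^{2*}_{\beta_1\beta_2\dots}=h_2\big(\sum_{n\ge1}\beta_n 2^{-n}\big)$, $\beta_n\in\{0,1\}$. The value of $f(x)$ given by the formula does not depend on which $s*$-code of $x$ is used, so $f$ is a well-defined function on $[0,1]$. *)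

theory Defs
  imports "HOL-Analysis.Analysis" "HOL-Library.Extended_Real"
begin

text \<open>Digit sequences are indexed from 0: alpha 0 is the paper's alpha_1.\<close>

definition sadic_value :: "nat \<Rightarrow> (nat \<Rightarrow> nat) \<Rightarrow> real" where
  "sadic_value s \<alpha> = (\<Sum>n. real (\<alpha> n) / real s ^ Suc n)"

definition digit_seq :: "nat \<Rightarrow> (nat \<Rightarrow> nat) \<Rightarrow> bool" where
  "digit_seq s \<alpha> \<longleftrightarrow> (\<forall>n. \<alpha> n < s)"

fun beta_seq :: "nat set \<Rightarrow> (nat \<Rightarrow> nat) \<Rightarrow> nat \<Rightarrow> nat" where
  "beta_seq A1 \<alpha> 0 = (if \<alpha> 0 \<in> A1 then 1 else 0)"
| "beta_seq A1 \<alpha> (Suc n) =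
     (if \<alpha> (Suc n) = \<alpha> n then beta_seq A1 \<alpha> n else 1 - beta_seq A1 \<alpha> n)"

text \<open>f(Delta^{s*}_{alpha}) = Delta^{2*}_{beta}, where Delta^{s*}_alpha = hs(sadic value of alpha)
  and Delta^{2*}_beta = h2(binary value of beta); some s*-code of x is chosen.\<close>
definition f_map :: "nat \<Rightarrow> nat set \<Rightarrow> (real \<Rightarrow> real) \<Rightarrow> (real \<Rightarrow> real) \<Rightarrow> real \<Rightarrow> real" where
  "f_map s A1 hs h2 x =
     h2 (sadic_value 2 (beta_seq A1 (SOME \<alpha>. digit_seq s \<alpha> \<and> hs (sadic_value s \<alpha>) = x)))"

definition total_variation :: "(real \<Rightarrow> real) \<Rightarrow> real \<Rightarrow> real \<Rightarrow> ereal" where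
  "total_variation g a b =
     (SUP p \<in> {(x, n). x 0 = a \<and> x n = b \<and> (\<forall>i<n. x i \<le> x (Suc i))}.
        ereal (\<Sum>i<snd p. \<bar>g (fst p (Suc i)) - g (fst p i)\<bar>))"

end

theory Submission
  imports Defs
begin
context fixes s :: nat assumes s2: "2 \<le> s"
begin

lemma summable_digits:
  assumes "\<And>n. \<alpha> n < s"
  shows "summable (\<lambda>n. real (\<alpha> n) / real s ^ Suc n)"
proof (rule summable_comparison_test[where g="\<lambda>n. (1/real s)^n"])
  show "summable (\<lambda>n. (1/real s)^n)" using s2 by (intro summable_geometric) auto
  show "\<exists>N. \<forall>n\<ge>N. norm (real (\<alpha> n) / real s ^ Suc n) \<le> (1 / real s) ^ n"
  proof (intro exI allI impI)
    fix n
    have "real (\<alpha> n) \<le> real s" using assms[of n] by simp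
    hence "real (\<alpha> n) / real s ^ Suc n \<le> real s / real s ^ Suc n"
      using s2 by (intro divide_right_mono) auto
    also have "\<dots> = (1/real s)^n" using s2 by (simp add: power_divide field_simps)
    finally show "norm (real (\<alpha> n) / real s ^ Suc n) \<le> (1 / real s) ^ n" by simp
  qed
qed

lemma val_cons:
  assumes "\<And>n. \<gamma> n < s" "d < s"
  shows "sadic_value s (case_nat d \<gamma>) = (real d + sadic_value s \<gamma>) / real s"
proof -
  have "(\<lambda>n. real (\<gamma> n) / real s ^ Suc n) sums sadic_value s \<gamma>"
    unfolding sadic_value_def using summable_digits[OF assms(1)] by (simp add: summable_sums)
  hence "(\<lambda>n. real (\<gamma> n) / real s ^ Suc n / real s) sums (sadic_value s \<gamma> / real s)"
    by (rule sums_divide)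
  hence "(\<lambda>n. real (case_nat d \<gamma> (Suc n)) / real s ^ Suc (Suc n)) sums (sadic_value s \<gamma> / real s)"
    by (simp add: field_simps)
  hence "(\<lambda>n. real (case_nat d \<gamma> n) / real s ^ Suc n) sums (sadic_value s \<gamma> / real s + real d / real s)"
    by (subst (asm) sums_Suc_iff) simp
  thus ?thesis unfolding sadic_value_def by (simp add: sums_iff add_divide_distrib)
qed

lemma val_bounds:
  assumes "\<And>n. \<alpha> n < s"
  shows "0 \<le> sadic_value s \<alpha>" "sadic_value s \<alpha> \<le> 1"
proof -
  show "0 \<le> sadic_value s \<alpha>" unfolding sadic_value_def
    by (intro suminf_nonneg summable_digits assms) auto
  have g: "(\<lambda>n. (real s - 1) / real s * (1/real s)^n) sums ((real s - 1) / real s * (1 / (1 - 1/real s)))"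
    using s2 by (intro sums_mult geometric_sums) auto
  have eq: "(real s - 1) / real s * (1 / (1 - 1/real s)) = 1" using s2 by (simp add: field_simps)
  have g': "(\<lambda>n. (real s - 1) / real s * (1/real s)^n) sums 1" using g unfolding eq .
  have "sadic_value s \<alpha> \<le> (\<Sum>n. (real s - 1) / real s * (1/real s)^n)"
    unfolding sadic_value_def
  proof (intro suminf_le summable_digits assms)
    show "summable (\<lambda>n. (real s - 1) / real s * (1/real s)^n)" using g' by (rule sums_summable)
    fix n
    have "real (\<alpha> n) \<le> real s - 1" using assms[of n] by linarith
    hence "real (\<alpha> n) / real s ^ Suc n \<le> (real s - 1) / real s ^ Suc n"
      using s2 by (intro divide_right_mono) auto
    also have "\<dots> = (real s - 1) / real s * (1/real s)^n" by (simp add: power_divide field_simps)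
    finally show "real (\<alpha> n) / real s ^ Suc n \<le> (real s - 1) / real s * (1/real s)^n" .
  qed
  thus "sadic_value s \<alpha> \<le> 1" using g' by (simp add: sums_iff)
qed

lemma val_const:
  assumes "t < s"
  shows "sadic_value s (\<lambda>_. t) = real t / (real s - 1)"
proof -
  have g: "(\<lambda>n. real t / real s * (1/real s)^n) sums (real t / real s * (1 / (1 - 1/real s)))"
    using s2 by (intro sums_mult geometric_sums) auto
  have "real t / real s * (1 / (1 - 1/real s)) = real t / (real s - 1)" using s2 by (simp add: field_simps)
  moreover have "(\<lambda>n. real t / real s * (1/real s)^n) = (\<lambda>n. real t / real s ^ Suc n)"
    by (simp add: power_divide field_simps)
  ultimately show ?thesis using g unfolding sadic_value_def by (simp add: sums_iff)
qed

lemma val_split: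
  assumes "\<And>n. \<alpha> n < s"
  shows "sadic_value s \<alpha> = (\<Sum>i<N. real (\<alpha> i) / real s ^ Suc i) + sadic_value s (\<lambda>j. \<alpha> (j + N)) / real s ^ N"
proof -
  have sm: "summable (\<lambda>n. real (\<alpha> n) / real s ^ Suc n)" by (rule summable_digits[OF assms])
  have sm2: "summable (\<lambda>n. real (\<alpha> (n + N)) / real s ^ Suc n)" by (rule summable_digits) (use assms in auto)
  have "(\<Sum>n. real (\<alpha> (n + N)) / real s ^ Suc (n + N)) = (\<Sum>n. real (\<alpha> (n + N)) / real s ^ Suc n / real s ^ N)"
    by (simp add: power_add field_simps)
  also have "\<dots> = (\<Sum>n. real (\<alpha> (n + N)) / real s ^ Suc n) / real s ^ N"
    using sm2 by (rule suminf_divide)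
  finally show ?thesis unfolding sadic_value_def using suminf_split_initial_segment[OF sm, of N] by simp
qed

end

fun alpha_cat :: "nat \<Rightarrow> nat \<Rightarrow> nat \<Rightarrow> (nat \<Rightarrow> nat) \<Rightarrow> nat \<Rightarrow> nat" where
  "alpha_cat s 0 m \<gamma> = \<gamma>"
| "alpha_cat s (Suc N) m \<gamma> = alpha_cat s N (m div s) (case_nat (m mod s) \<gamma>)"

lemma alpha_cat_digit: "0 < s \<Longrightarrow> (\<And>n. \<gamma> n < s) \<Longrightarrow> alpha_cat s N m \<gamma> n < s"
proof (induction N arbitrary: m \<gamma>)
  case 0 then show ?case by simp
next
  case (Suc N)
  have "\<And>n. case_nat (m mod s) \<gamma> n < s" using Suc.prems by (simp split: nat.split)
  then show ?case using Suc.IH[OF Suc.prems(1)] by simp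
qed

lemma alpha_cat_tail: "alpha_cat s N m \<gamma> (N + j) = \<gamma> j"
proof (induction N arbitrary: m \<gamma> j)
  case 0 then show ?case by simp
next
  case (Suc N)
  have "Suc N + j = N + Suc j" by simp
  then show ?case using Suc.IH[of "m div s" "case_nat (m mod s) \<gamma>" "Suc j"] by simp
qed

lemma alpha_cat_last: "alpha_cat s (Suc N) m \<gamma> N = m mod s"
  using alpha_cat_tail[of s N "m div s" "case_nat (m mod s) \<gamma>" 0] by simp

lemma alpha_cat_prefix: "i < N \<Longrightarrow> alpha_cat s N m \<gamma> i = alpha_cat s N m \<gamma>' i"
proof (induction N arbitrary: m \<gamma> \<gamma>')
  case 0 then show ?case by simp
next
  case (Suc N)
  show ?case
  proof (cases "i < N")
    case True then show ?thesis using Suc.IH by simp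
  next
    case False
    hence "i = N" using Suc.prems by simp
    then show ?thesis using alpha_cat_last by simp
  qed
qed

lemma val_cat:
  assumes "2 \<le> s" "\<And>n. \<gamma> n < s" "m < s ^ N"
  shows "sadic_value s (alpha_cat s N m \<gamma>) = (real m + sadic_value s \<gamma>) / real s ^ N"
  using assms(2,3)
proof (induction N arbitrary: m \<gamma>)
  case 0 then show ?case by simp
next
  case (Suc N)
  have d: "\<And>n. case_nat (m mod s) \<gamma> n < s"
  proof -
    fix n show "case_nat (m mod s) \<gamma> n < s" using Suc.prems(1) assms(1) by (cases n) auto
  qed
  have md: "m div s < s ^ N" using Suc.prems(2) by (metis less_mult_imp_div_less mult.commute power_Suc)
  have e1: "sadic_value s (alpha_cat s (Suc N) m \<gamma>) = (real (m div s) + sadic_value s (case_nat (m mod s) \<gamma>)) / real s ^ N"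
    using Suc.IH[OF d md] by simp
  have e2: "sadic_value s (case_nat (m mod s) \<gamma>) = (real (m mod s) + sadic_value s \<gamma>) / real s"
    by (rule val_cons[OF assms(1) Suc.prems(1)]) (use assms(1) in simp)
  have "s * (m div s) + m mod s = m" by (rule mult_div_mod_eq)
  hence e3: "real s * real (m div s) + real (m mod s) = real m"
    by (metis of_nat_add of_nat_mult)
  have sp: "real s > 0" using assms(1) by simp
  have "sadic_value s (alpha_cat s (Suc N) m \<gamma>) = (real (m div s) + (real (m mod s) + sadic_value s \<gamma>) / real s) / real s ^ N"
    using e1 e2 by simp
  also have "\<dots> = (real s * real (m div s) + real (m mod s) + sadic_value s \<gamma>) / real s ^ Suc N"
    using sp by (simp add: field_simps)
  finally show ?case unfolding e3 .
qed

lemma beta_le1: "beta_seq A1 \<alpha> n \<le> 1"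
  by (induction n) auto

lemma beta_prefix: "(\<And>j. j \<le> i \<Longrightarrow> \<alpha> j = \<alpha>' j) \<Longrightarrow> beta_seq A1 \<alpha> i = beta_seq A1 \<alpha>' i"
  by (induction i) auto

fun Bidx :: "nat \<Rightarrow> nat set \<Rightarrow> nat \<Rightarrow> nat \<Rightarrow> nat" where
  "Bidx s A1 0 m = 0"
| "Bidx s A1 (Suc 0) m = (if m mod s \<in> A1 then 1 else 0)"
| "Bidx s A1 (Suc (Suc n)) m = 2 * Bidx s A1 (Suc n) (m div s) +
     (if m mod s = (m div s) mod s then Bidx s A1 (Suc n) (m div s) mod 2
      else 1 - Bidx s A1 (Suc n) (m div s) mod 2)"

lemma Bidx_lt: "Bidx s A1 N m < 2 ^ N"
proof (induction s A1 N m rule: Bidx.induct)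
  case (3 s A1 n m)
  define p where "p = Bidx s A1 (Suc n) (m div s)"
  define b where "b = (if m mod s = (m div s) mod s then p mod 2 else 1 - p mod 2)"
  have p: "p < 2 ^ Suc n" using 3 by (simp add: p_def)
  have b: "b \<le> 1" unfolding b_def by auto
  have e: "Bidx s A1 (Suc (Suc n)) m = 2 * p + b" by (simp add: p_def b_def)
  have "(2::nat) ^ Suc (Suc n) = 2 * 2 ^ Suc n" by simp
  then show ?case using e p b by linarith
qed auto

lemma Bidx_beta:
  "(\<Sum>i<N. real (beta_seq A1 (alpha_cat s N m \<gamma>) i) / 2 ^ Suc i) = real (Bidx s A1 N m) / 2 ^ N
   \<and> (1 \<le> N \<longrightarrow> beta_seq A1 (alpha_cat s N m \<gamma>) (N - 1) = Bidx s A1 N m mod 2)"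
proof (induction N arbitrary: m \<gamma>)
  case 0 then show ?case by simp
next
  case (Suc n)
  show ?case
  proof (cases n)
    case 0
    have "beta_seq A1 (alpha_cat s (Suc 0) m \<gamma>) 0 = (if m mod s \<in> A1 then 1 else 0)" by simp
    then show ?thesis unfolding 0 by simp
  next
    case (Suc k)
    define \<delta> where "\<delta> = case_nat (m mod s) \<gamma>"
    define \<alpha> where "\<alpha> = alpha_cat s (Suc k) (m div s) \<delta>"
    have a: "alpha_cat s (Suc n) m \<gamma> = \<alpha>" unfolding \<alpha>_def \<delta>_def Suc by simp
    define p where "p = Bidx s A1 (Suc k) (m div s)"
    have IH1: "(\<Sum>i<Suc k. real (beta_seq A1 \<alpha> i) / 2 ^ Suc i) = real p / 2 ^ Suc k"
      and IH2: "beta_seq A1 \<alpha> k = p mod 2"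
      using Suc.IH[of "m div s" \<delta>] unfolding \<alpha>_def p_def Suc by auto
    have a1: "\<alpha> (Suc k) = m mod s" unfolding \<alpha>_def \<delta>_def
      using alpha_cat_tail[of s "Suc k" "m div s" _ 0] by simp
    have a0: "\<alpha> k = (m div s) mod s" unfolding \<alpha>_def by (rule alpha_cat_last)
    define b where "b = (if m mod s = (m div s) mod s then p mod 2 else 1 - p mod 2)"
    have bb: "beta_seq A1 \<alpha> (Suc k) = b" unfolding b_def using a1 a0 IH2 by simp
    have B: "Bidx s A1 (Suc (Suc k)) m = 2 * p + b" unfolding p_def b_def by simp
    have b1: "b \<le> 1" unfolding b_def by auto
    have "(\<Sum>i<Suc (Suc k). real (beta_seq A1 \<alpha> i) / 2 ^ Suc i) = real p / 2 ^ Suc k + real b / 2 ^ Suc (Suc k)"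
      using IH1 bb by simp
    also have "\<dots> = real (2 * p + b) / 2 ^ Suc (Suc k)" by (simp add: field_simps)
    finally have S: "(\<Sum>i<Suc (Suc k). real (beta_seq A1 \<alpha> i) / 2 ^ Suc i) = real (Bidx s A1 (Suc (Suc k)) m) / 2 ^ Suc (Suc k)"
      unfolding B .
    have "Bidx s A1 (Suc (Suc k)) m mod 2 = b" unfolding B using b1 by simp
    hence L: "beta_seq A1 \<alpha> (Suc (Suc k) - 1) = Bidx s A1 (Suc (Suc k)) m mod 2" using bb by simp
    have a': "alpha_cat s (Suc (Suc k)) m \<gamma> = \<alpha>" using a Suc by simp
    show ?thesis unfolding a' \<open>n = Suc k\<close> using S L by blast
  qed
qed

lemma beta_const_tail:
  "beta_seq A1 (alpha_cat s N m (\<lambda>_. t)) (N + j) = beta_seq A1 (alpha_cat s N m (\<lambda>_. t)) N"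
proof (induction j)
  case 0 then show ?case by simp
next
  case (Suc j)
  define \<alpha> where "\<alpha> = alpha_cat s N m (\<lambda>_. t)"
  have e: "\<alpha> (Suc (N + j)) = \<alpha> (N + j)" unfolding \<alpha>_def
    using alpha_cat_tail[of s N m "\<lambda>_. t" "Suc j"] alpha_cat_tail[of s N m "\<lambda>_. t" j] by simp
  have "beta_seq A1 \<alpha> (Suc (N + j)) = beta_seq A1 \<alpha> (N + j)"
    unfolding beta_seq.simps(2) e by simp
  then show ?case using Suc unfolding \<alpha>_def by simp
qed

lemma bval_cyl:
  assumes "1 \<le> N"
  shows "sadic_value 2 (beta_seq A1 (alpha_cat s N m (\<lambda>_. t))) =
    (real (Bidx s A1 N m) + real (if t = m mod s then Bidx s A1 N m mod 2 else 1 - Bidx s A1 N m mod 2)) / 2 ^ N"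
proof -
  define \<alpha> where "\<alpha> = alpha_cat s N m (\<lambda>_. t)"
  define \<beta> where "\<beta> = beta_seq A1 \<alpha>"
  have d: "\<beta> n < 2" for n
  proof -
    have "\<beta> n \<le> 1" unfolding \<beta>_def by (rule beta_le1)
    thus ?thesis by linarith
  qed
  have sp: "sadic_value 2 \<beta> = (\<Sum>i<N. real (\<beta> i) / real 2 ^ Suc i) + sadic_value 2 (\<lambda>j. \<beta> (j + N)) / real 2 ^ N"
    by (rule val_split) (use d in auto)
  have "(\<lambda>j. \<beta> (j + N)) = (\<lambda>_. \<beta> N)"
    by (rule ext) (metis add.commute beta_const_tail \<beta>_def \<alpha>_def)
  hence tl: "sadic_value 2 (\<lambda>j. \<beta> (j + N)) = real (\<beta> N)" using val_const[of 2 "\<beta> N"] d by simp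
  obtain k where k: "N = Suc k" using assms by (cases N) auto
  have aN: "\<alpha> N = t" unfolding \<alpha>_def using alpha_cat_tail[of s N m _ 0] by simp
  have ak: "\<alpha> k = m mod s" unfolding \<alpha>_def k by (rule alpha_cat_last)
  have "1 \<le> N \<longrightarrow> \<beta> (N - 1) = Bidx s A1 N m mod 2"
    using Bidx_beta[of A1 s N m "\<lambda>_. t"]
    unfolding \<beta>_def \<alpha>_def by (rule conjunct2)
  then have bk: "\<beta> k = Bidx s A1 N m mod 2" using assms k by simp
  have "\<beta> (Suc k) = (if \<alpha> (Suc k) = \<alpha> k then \<beta> k else 1 - \<beta> k)" unfolding \<beta>_def by simp
  hence bN: "\<beta> N = (if t = m mod s then Bidx s A1 N m mod 2 else 1 - Bidx s A1 N m mod 2)"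
    using aN ak bk unfolding k by simp
  have pre: "(\<Sum>i<N. real (\<beta> i) / real 2 ^ Suc i) = real (Bidx s A1 N m) / 2 ^ N"
    using Bidx_beta[of A1 s N m "\<lambda>_. t"] unfolding \<beta>_def \<alpha>_def by simp
  have fin: "sadic_value 2 \<beta> = (real (Bidx s A1 N m) + real (if t = m mod s then Bidx s A1 N m mod 2 else 1 - Bidx s A1 N m mod 2)) / 2 ^ N"
    unfolding sp tl pre bN by (simp add: add_divide_distrib)
  show ?thesis using fin unfolding \<beta>_def \<alpha>_def .
qed

lemma flip_tail:
  assumes "\<And>j. \<alpha> (Suc k + j) = c" "c \<noteq> \<alpha> k"
  shows "beta_seq A1 \<alpha> (Suc k + j) = 1 - beta_seq A1 \<alpha> k"
proof (induction j)
  case 0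
  have "\<alpha> (Suc k) \<noteq> \<alpha> k" using assms(1)[of 0] assms(2) by simp
  then show ?case by simp
next
  case (Suc j)
  have "\<alpha> (Suc (Suc k + j)) = \<alpha> (Suc k + j)" using assms(1)[of j] assms(1)[of "Suc j"] by simp
  hence "beta_seq A1 \<alpha> (Suc (Suc k + j)) = beta_seq A1 \<alpha> (Suc k + j)"
    unfolding beta_seq.simps(2) by simp
  then show ?case using Suc by simp
qed

lemma bval_flip:
  assumes "\<And>j. beta_seq A1 \<alpha> (Suc k + j) = 1 - beta_seq A1 \<alpha> k"
  shows "sadic_value 2 (beta_seq A1 \<alpha>) = (\<Sum>i<k. real (beta_seq A1 \<alpha> i) / 2 ^ Suc i) + 1 / 2 ^ Suc k"
proof -
  define \<beta> where "\<beta> = beta_seq A1 \<alpha>"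
  have d: "\<beta> n < 2" for n
  proof -
    have "\<beta> n \<le> 1" unfolding \<beta>_def by (rule beta_le1)
    thus ?thesis by linarith
  qed
  have sp: "sadic_value 2 \<beta> = (\<Sum>i<Suc k. real (\<beta> i) / real 2 ^ Suc i) + sadic_value 2 (\<lambda>j. \<beta> (j + Suc k)) / real 2 ^ Suc k"
    by (rule val_split) (use d in auto)
  have "(\<lambda>j. \<beta> (j + Suc k)) = (\<lambda>_. 1 - \<beta> k)"
    by (rule ext) (metis add.commute assms \<beta>_def)
  hence tl: "sadic_value 2 (\<lambda>j. \<beta> (j + Suc k)) = real (1 - \<beta> k)" using val_const[of 2 "1 - \<beta> k"] by simp
  have b1: "\<beta> k \<le> 1" unfolding \<beta>_def by (rule beta_le1)
  hence r: "real (\<beta> k) + real (1 - \<beta> k) = 1" by (simp add: of_nat_diff)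
  have "sadic_value 2 \<beta> = (\<Sum>i<k. real (\<beta> i) / 2 ^ Suc i) + (real (\<beta> k) + real (1 - \<beta> k)) / 2 ^ Suc k"
    unfolding sp tl by (simp add: add_divide_distrib)
  thus ?thesis using r unfolding \<beta>_def by simp
qed

context fixes s :: nat assumes s2: "2 \<le> s"
begin

lemma val_zero_digits:
  assumes "\<And>n. \<gamma> n < s" "sadic_value s \<gamma> = 0"
  shows "\<gamma> j = 0"
proof -
  have "\<forall>n. real (\<gamma> n) / real s ^ Suc n = 0"
    using assms(2) summable_digits[OF s2 assms(1)] unfolding sadic_value_def
    by (subst (asm) suminf_eq_zero_iff) auto
  moreover have "real s ^ Suc j \<noteq> 0" using s2 by simp
  ultimately show ?thesis by simp
qed

lemma val_eq_struct:
  assumes da: "\<And>n. \<alpha> n < s" and db: "\<And>n. \<alpha>' n < s"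
    and pre: "\<And>i. i < k \<Longrightarrow> \<alpha> i = \<alpha>' i" and lt: "\<alpha> k < \<alpha>' k"
    and eq: "sadic_value s \<alpha> = sadic_value s \<alpha>'"
  shows "\<alpha>' k = Suc (\<alpha> k) \<and> (\<forall>j. \<alpha> (Suc k + j) = s - 1) \<and> (\<forall>j. \<alpha>' (Suc k + j) = 0)"
proof -
  define T where "T = sadic_value s (\<lambda>j. \<alpha> (j + Suc k))"
  define T' where "T' = sadic_value s (\<lambda>j. \<alpha>' (j + Suc k))"
  have dT: "\<And>j. \<alpha> (j + Suc k) < s" using da by simp
  have dT': "\<And>j. \<alpha>' (j + Suc k) < s" using db by simp
  have T1: "T \<le> 1" unfolding T_def by (rule val_bounds(2)[OF s2 dT])
  have T0: "0 \<le> T'" unfolding T'_def by (rule val_bounds(1)[OF s2 dT'])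
  have "sadic_value s \<alpha> = (\<Sum>i<Suc k. real (\<alpha> i) / real s ^ Suc i) + T / real s ^ Suc k"
    using val_split[OF s2 da, where N="Suc k"] unfolding T_def .
  hence v1: "sadic_value s \<alpha> = (\<Sum>i<k. real (\<alpha> i) / real s ^ Suc i) + real (\<alpha> k) / real s ^ Suc k + T / real s ^ Suc k"
    by (simp only: sum.lessThan_Suc)
  have "sadic_value s \<alpha>' = (\<Sum>i<Suc k. real (\<alpha>' i) / real s ^ Suc i) + T' / real s ^ Suc k"
    using val_split[OF s2 db, where N="Suc k"] unfolding T'_def .
  hence v2': "sadic_value s \<alpha>' = (\<Sum>i<k. real (\<alpha>' i) / real s ^ Suc i) + real (\<alpha>' k) / real s ^ Suc k + T' / real s ^ Suc k"
    by (simp only: sum.lessThan_Suc)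
  have "(\<Sum>i<k. real (\<alpha>' i) / real s ^ Suc i) = (\<Sum>i<k. real (\<alpha> i) / real s ^ Suc i)"
    by (rule sum.cong) (use pre in auto)
  with v2' have v2: "sadic_value s \<alpha>' = (\<Sum>i<k. real (\<alpha> i) / real s ^ Suc i) + real (\<alpha>' k) / real s ^ Suc k + T' / real s ^ Suc k"
    by simp
  have sp: "real s ^ Suc k > 0" using s2 by simp
  from eq v1 v2 have "real (\<alpha> k) / real s ^ Suc k + T / real s ^ Suc k = real (\<alpha>' k) / real s ^ Suc k + T' / real s ^ Suc k"
    by simp
  hence "(real (\<alpha> k) + T) / real s ^ Suc k = (real (\<alpha>' k) + T') / real s ^ Suc k"
    by (simp only: add_divide_distrib)
  hence e: "real (\<alpha> k) + T = real (\<alpha>' k) + T'" using sp s2 by (simp only: divide_cancel_right) auto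
  have "real (\<alpha>' k) \<ge> real (\<alpha> k) + 1" using lt by linarith
  hence c1: "\<alpha>' k = Suc (\<alpha> k)" and c2: "T = 1" and c3: "T' = 0" using e T1 T0 by linarith+
  have z': "\<alpha>' (j + Suc k) = 0" for j using val_zero_digits[of "\<lambda>j. \<alpha>' (j + Suc k)" j] dT' c3[unfolded T'_def] by blast
  define \<gamma> where "\<gamma> = (\<lambda>j. s - 1 - \<alpha> (j + Suc k))"
  have dg: "\<And>n. \<gamma> n < s" unfolding \<gamma>_def using s2 by simp
  have sm1: "summable (\<lambda>n. real (s - 1) / real s ^ Suc n)" by (rule summable_digits[OF s2]) (use s2 in simp)
  have sm2: "summable (\<lambda>n. real (\<alpha> (n + Suc k)) / real s ^ Suc n)" by (rule summable_digits[OF s2 dT])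
  have "sadic_value s \<gamma> = (\<Sum>n. real (s - 1) / real s ^ Suc n - real (\<alpha> (n + Suc k)) / real s ^ Suc n)"
    unfolding sadic_value_def \<gamma>_def
  proof (rule suminf_cong)
    fix n
    have "\<alpha> (n + Suc k) \<le> s - 1" using dT[of n] by linarith
    hence "real (s - 1 - \<alpha> (n + Suc k)) = real (s - 1) - real (\<alpha> (n + Suc k))" by (rule of_nat_diff)
    thus "real (s - 1 - \<alpha> (n + Suc k)) / real s ^ Suc n = real (s - 1) / real s ^ Suc n - real (\<alpha> (n + Suc k)) / real s ^ Suc n"
      by (simp only: diff_divide_distrib)
  qed
  also have "\<dots> = sadic_value s (\<lambda>_. s - 1) - T"
    unfolding sadic_value_def T_def using suminf_diff[OF sm1 sm2] by simp
  also have "sadic_value s (\<lambda>_. s - 1) = 1" using val_const[OF s2, of "s - 1"] s2 by (simp add: of_nat_diff)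
  finally have "sadic_value s \<gamma> = 0" using c2 by simp
  hence "\<gamma> j = 0" for j using val_zero_digits[of \<gamma> j] dg by blast
  hence z: "\<alpha> (j + Suc k) = s - 1" for j
  proof -
    have "s - 1 - \<alpha> (j + Suc k) = 0" using \<open>\<And>j. \<gamma> j = 0\<close>[of j] unfolding \<gamma>_def .
    thus ?thesis using dT[of j] by arith
  qed
  have z2: "\<forall>j. \<alpha> (Suc k + j) = s - 1" using z by (metis add.commute)
  have z3: "\<forall>j. \<alpha>' (Suc k + j) = 0" using z' by (metis add.commute)
  show ?thesis using c1 z2 z3 by blast
qed

lemma well_def_core:
  assumes da: "\<And>n. \<alpha> n < s" and db: "\<And>n. \<alpha>' n < s"
    and pre: "\<And>i. i < k \<Longrightarrow> \<alpha> i = \<alpha>' i" and lt: "\<alpha> k < \<alpha>' k"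
    and eq: "sadic_value s \<alpha> = sadic_value s \<alpha>'"
  shows "sadic_value 2 (beta_seq A1 \<alpha>) = sadic_value 2 (beta_seq A1 \<alpha>')"
proof -
  note st = val_eq_struct[OF da db pre lt eq]
  have ne1: "s - 1 \<noteq> \<alpha> k" using lt db[of k] by linarith
  have ne2: "0 \<noteq> \<alpha>' k" using lt by linarith
  have f1: "beta_seq A1 \<alpha> (Suc k + j) = 1 - beta_seq A1 \<alpha> k" for j
    by (rule flip_tail[of \<alpha> k "s - 1"]) (use st ne1 in auto)
  have f2: "beta_seq A1 \<alpha>' (Suc k + j) = 1 - beta_seq A1 \<alpha>' k" for j
    by (rule flip_tail[of \<alpha>' k 0]) (use st ne2 in auto)
  have bp: "beta_seq A1 \<alpha> i = beta_seq A1 \<alpha>' i" if "i < k" for i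
    by (rule beta_prefix) (use pre that in auto)
  show ?thesis unfolding bval_flip[of A1 \<alpha> k, OF f1] bval_flip[of A1 \<alpha>' k, OF f2]
    using bp by simp
qed

lemma well_def:
  assumes da: "\<And>n. \<alpha> n < s" and db: "\<And>n. \<alpha>' n < s"
    and eq: "sadic_value s \<alpha> = sadic_value s \<alpha>'"
  shows "sadic_value 2 (beta_seq A1 \<alpha>) = sadic_value 2 (beta_seq A1 \<alpha>')"
proof (cases "\<alpha> = \<alpha>'")
  case True then show ?thesis by simp
next
  case False
  then obtain i where "\<alpha> i \<noteq> \<alpha>' i" by auto
  define k where "k = (LEAST i. \<alpha> i \<noteq> \<alpha>' i)"
  have nk: "\<alpha> k \<noteq> \<alpha>' k" unfolding k_def by (rule LeastI) fact
  have pre: "\<And>j. j < k \<Longrightarrow> \<alpha> j = \<alpha>' j" unfolding k_def using not_less_Least by blast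
  show ?thesis
  proof (cases "\<alpha> k < \<alpha>' k")
    case True then show ?thesis using well_def_core[OF da db pre _ eq] by blast
  next
    case False
    hence "\<alpha>' k < \<alpha> k" using nk by linarith
    then show ?thesis using well_def_core[OF db da, of k, OF _ _ eq[symmetric]] pre by fastforce
  qed
qed

end

context fixes s :: nat assumes s2: "2 \<le> s"
begin

lemma partial_floor:
  assumes "0 \<le> t" "t < 1"
  shows "(\<Sum>i<n. real (nat (\<lfloor>real s ^ Suc i * t\<rfloor> mod int s)) / real s ^ Suc i) = real_of_int \<lfloor>real s ^ n * t\<rfloor> / real s ^ n"
proof (induction n)
  case 0
  have "\<lfloor>t\<rfloor> = 0" using assms by (simp add: floor_eq_iff)
  then show ?case by simp
next
  case (Suc n)
  define X where "X = real s ^ Suc n * t"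
  have sp: "real s > 0" using s2 by simp
  have "X / real_of_int (int s) = real s ^ n * t" unfolding X_def using sp by simp
  hence dv: "\<lfloor>X\<rfloor> div int s = \<lfloor>real s ^ n * t\<rfloor>"
    using floor_divide_real_eq_div[of "int s" X] by simp
  have dec: "\<lfloor>X\<rfloor> = int s * (\<lfloor>X\<rfloor> div int s) + \<lfloor>X\<rfloor> mod int s" by simp
  have nn: "0 \<le> \<lfloor>X\<rfloor> mod int s" using sp by simp
  hence r: "real (nat (\<lfloor>X\<rfloor> mod int s)) = real_of_int (\<lfloor>X\<rfloor> mod int s)" by simp
  have "(\<Sum>i<Suc n. real (nat (\<lfloor>real s ^ Suc i * t\<rfloor> mod int s)) / real s ^ Suc i)
      = real_of_int \<lfloor>real s ^ n * t\<rfloor> / real s ^ n + real_of_int (\<lfloor>X\<rfloor> mod int s) / real s ^ Suc n"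
    using Suc r unfolding X_def by simp
  also have "\<dots> = (real s * real_of_int (\<lfloor>X\<rfloor> div int s) + real_of_int (\<lfloor>X\<rfloor> mod int s)) / real s ^ Suc n"
    unfolding dv using sp by (simp add: field_simps)
  also have "real s * real_of_int (\<lfloor>X\<rfloor> div int s) + real_of_int (\<lfloor>X\<rfloor> mod int s) = real_of_int (int s * (\<lfloor>X\<rfloor> div int s) + \<lfloor>X\<rfloor> mod int s)"
    by (simp only: of_int_add of_int_mult of_int_of_nat_eq)
  also have "int s * (\<lfloor>X\<rfloor> div int s) + \<lfloor>X\<rfloor> mod int s = \<lfloor>X\<rfloor>" by (simp only: mult_div_mod_eq)
  finally show ?case unfolding X_def .
qed

lemma code_exists:
  assumes "0 \<le> t" "t \<le> 1"
  shows "\<exists>\<alpha>. (\<forall>n. \<alpha> n < s) \<and> sadic_value s \<alpha> = t"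
proof (cases "t = 1")
  case True
  have "sadic_value s (\<lambda>_. s - 1) = 1" using val_const[OF s2, of "s - 1"] s2 by (simp add: of_nat_diff)
  thus ?thesis using True s2 by (intro exI[of _ "\<lambda>_. s - 1"]) auto
next
  case False
  hence t1: "t < 1" using assms by simp
  define \<alpha> where "\<alpha> n = nat (\<lfloor>real s ^ Suc n * t\<rfloor> mod int s)" for n
  have sp: "int s > 0" using s2 by simp
  have dig: "\<alpha> n < s" for n
  proof -
    have "\<lfloor>real s ^ Suc n * t\<rfloor> mod int s < int s" "0 \<le> \<lfloor>real s ^ Suc n * t\<rfloor> mod int s" using sp by simp_all
    thus ?thesis unfolding \<alpha>_def by linarith
  qed
  have ps: "(\<Sum>i<n. real (\<alpha> i) / real s ^ Suc i) = real_of_int \<lfloor>real s ^ n * t\<rfloor> / real s ^ n" for n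
    unfolding \<alpha>_def by (rule partial_floor[OF assms(1) t1])
  have lim: "(\<lambda>n. real_of_int \<lfloor>real s ^ n * t\<rfloor> / real s ^ n) \<longlonglongrightarrow> t"
  proof (rule tendsto_sandwich[where f="\<lambda>n. t - (1 / real s) ^ n" and h="\<lambda>n. t"])
    have "(\<lambda>n. (1 / real s) ^ n) \<longlonglongrightarrow> 0" using s2 by (intro LIMSEQ_power_zero) auto
    hence "(\<lambda>n. t - (1 / real s) ^ n) \<longlonglongrightarrow> t - 0" by (intro tendsto_diff) auto
    thus "(\<lambda>n. t - (1 / real s) ^ n) \<longlonglongrightarrow> t" by simp
    show "(\<lambda>n. t) \<longlonglongrightarrow> t" by simp
    show "\<forall>\<^sub>F n in sequentially. t - (1 / real s) ^ n \<le> real_of_int \<lfloor>real s ^ n * t\<rfloor> / real s ^ n"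
    proof (intro always_eventually allI)
      fix n
      have pp: "real s ^ n > 0" using s2 by simp
      have "real s ^ n * t - 1 \<le> real_of_int \<lfloor>real s ^ n * t\<rfloor>" by linarith
      hence "(real s ^ n * t - 1) / real s ^ n \<le> real_of_int \<lfloor>real s ^ n * t\<rfloor> / real s ^ n"
        using pp by (intro divide_right_mono) auto
      moreover have "(real s ^ n * t - 1) / real s ^ n = t - (1 / real s) ^ n"
        using pp by (simp add: field_simps power_divide)
      ultimately show "t - (1 / real s) ^ n \<le> real_of_int \<lfloor>real s ^ n * t\<rfloor> / real s ^ n" by simp
    qed
    show "\<forall>\<^sub>F n in sequentially. real_of_int \<lfloor>real s ^ n * t\<rfloor> / real s ^ n \<le> t"
    proof (intro always_eventually allI)
      fix n
      have pp: "real s ^ n > 0" using s2 by simp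
      have "real_of_int \<lfloor>real s ^ n * t\<rfloor> \<le> real s ^ n * t" by linarith
      hence "real_of_int \<lfloor>real s ^ n * t\<rfloor> / real s ^ n \<le> real s ^ n * t / real s ^ n"
        using pp by (intro divide_right_mono) auto
      moreover have "real s ^ n * t / real s ^ n = t" using pp by simp
      ultimately show "real_of_int \<lfloor>real s ^ n * t\<rfloor> / real s ^ n \<le> t" by simp
    qed
  qed
  have "(\<lambda>n. real (\<alpha> n) / real s ^ Suc n) sums t"
    unfolding sums_def ps using lim .
  hence "sadic_value s \<alpha> = t" unfolding sadic_value_def by (simp add: sums_iff)
  thus ?thesis using dig by blast
qed

lemma cyl_code:
  assumes "m < s ^ N" "real m / real s ^ N \<le> y" "y \<le> (real m + 1) / real s ^ N"
  shows "\<exists>\<gamma>. (\<forall>n. \<gamma> n < s) \<and> sadic_value s (alpha_cat s N m \<gamma>) = y"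
proof -
  have pp: "real s ^ N > 0" using s2 by simp
  define t where "t = real s ^ N * y - real m"
  have t0: "0 \<le> t" using assms(2) pp unfolding t_def by (simp add: field_simps)
  have t1: "t \<le> 1" using assms(3) pp unfolding t_def by (simp add: field_simps)
  obtain \<gamma> where g: "\<forall>n. \<gamma> n < s" "sadic_value s \<gamma> = t" using code_exists[OF t0 t1] by blast
  have "sadic_value s (alpha_cat s N m \<gamma>) = (real m + t) / real s ^ N"
    using val_cat[OF s2 _ assms(1)] g by simp
  also have "\<dots> = y" unfolding t_def using pp by simp
  finally show ?thesis using g by blast
qed

lemma bval_prefix_close:
  assumes "\<And>i. i < N \<Longrightarrow> \<alpha> i = \<alpha>' i"
  shows "\<bar>sadic_value 2 (beta_seq A1 \<alpha>) - sadic_value 2 (beta_seq A1 \<alpha>')\<bar> \<le> 1 / 2 ^ N"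
proof -
  have d: "beta_seq A1 \<gamma> n < 2" for \<gamma> n
  proof -
    have "beta_seq A1 \<gamma> n \<le> 1" by (rule beta_le1)
    thus ?thesis by linarith
  qed
  have sp: "sadic_value 2 (beta_seq A1 \<gamma>) = (\<Sum>i<N. real (beta_seq A1 \<gamma> i) / real 2 ^ Suc i) + sadic_value 2 (\<lambda>j. beta_seq A1 \<gamma> (j + N)) / real 2 ^ N" for \<gamma>
    by (rule val_split) (use d in auto)
  have bp: "(\<Sum>i<N. real (beta_seq A1 \<alpha> i) / real 2 ^ Suc i) = (\<Sum>i<N. real (beta_seq A1 \<alpha>' i) / real 2 ^ Suc i)"
  proof (rule sum.cong[OF refl])
    fix i assume "i \<in> {..<N}"
    hence "beta_seq A1 \<alpha> i = beta_seq A1 \<alpha>' i" by (intro beta_prefix) (use assms in auto)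
    thus "real (beta_seq A1 \<alpha> i) / real 2 ^ Suc i = real (beta_seq A1 \<alpha>' i) / real 2 ^ Suc i" by simp
  qed
  have b: "0 \<le> sadic_value 2 (\<lambda>j. beta_seq A1 \<gamma> (j + N))" "sadic_value 2 (\<lambda>j. beta_seq A1 \<gamma> (j + N)) \<le> 1" for \<gamma>
    using val_bounds[of 2 "\<lambda>j. beta_seq A1 \<gamma> (j + N)"] d by auto
  have pp: "(2::real) ^ N > 0" by simp
  have "\<bar>sadic_value 2 (\<lambda>j. beta_seq A1 \<alpha> (j + N)) - sadic_value 2 (\<lambda>j. beta_seq A1 \<alpha>' (j + N))\<bar> \<le> 1"
    using b[of \<alpha>] b[of \<alpha>'] by linarith
  hence "\<bar>sadic_value 2 (\<lambda>j. beta_seq A1 \<alpha> (j + N)) - sadic_value 2 (\<lambda>j. beta_seq A1 \<alpha>' (j + N))\<bar> / 2 ^ N \<le> 1 / 2 ^ N"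
    using pp by (intro divide_right_mono) auto
  moreover have e: "sadic_value 2 (beta_seq A1 \<alpha>) - sadic_value 2 (beta_seq A1 \<alpha>') =
     (sadic_value 2 (\<lambda>j. beta_seq A1 \<alpha> (j + N)) - sadic_value 2 (\<lambda>j. beta_seq A1 \<alpha>' (j + N))) / 2 ^ N"
    unfolding sp[of \<alpha>] sp[of \<alpha>'] bp by (simp add: diff_divide_distrib)
  moreover have "\<bar>(sadic_value 2 (\<lambda>j. beta_seq A1 \<alpha> (j + N)) - sadic_value 2 (\<lambda>j. beta_seq A1 \<alpha>' (j + N))) / 2 ^ N\<bar>
     = \<bar>sadic_value 2 (\<lambda>j. beta_seq A1 \<alpha> (j + N)) - sadic_value 2 (\<lambda>j. beta_seq A1 \<alpha>' (j + N))\<bar> / 2 ^ N"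
    using pp by (simp add: abs_divide)
  ultimately show ?thesis by (simp only:)
qed

end

definition gfun :: "nat \<Rightarrow> nat set \<Rightarrow> real \<Rightarrow> real" where
  "gfun s A1 y = sadic_value 2 (beta_seq A1 (SOME \<alpha>. digit_seq s \<alpha> \<and> sadic_value s \<alpha> = y))"

context fixes s :: nat assumes s2: "2 \<le> s"
begin

lemma g_eq:
  assumes "\<And>n. \<alpha> n < s"
  shows "gfun s A1 (sadic_value s \<alpha>) = sadic_value 2 (beta_seq A1 \<alpha>)"
proof -
  define \<alpha>1 where "\<alpha>1 = (SOME \<alpha>'. digit_seq s \<alpha>' \<and> sadic_value s \<alpha>' = sadic_value s \<alpha>)"
  have "digit_seq s \<alpha> \<and> sadic_value s \<alpha> = sadic_value s \<alpha>" using assms unfolding digit_seq_def by simp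
  hence "digit_seq s \<alpha>1 \<and> sadic_value s \<alpha>1 = sadic_value s \<alpha>" unfolding \<alpha>1_def
    by (rule someI[where P="\<lambda>\<alpha>'. digit_seq s \<alpha>' \<and> sadic_value s \<alpha>' = sadic_value s \<alpha>"])
  hence "sadic_value 2 (beta_seq A1 \<alpha>1) = sadic_value 2 (beta_seq A1 \<alpha>)"
    using well_def[OF s2] assms unfolding digit_seq_def by blast
  thus ?thesis unfolding gfun_def \<alpha>1_def .
qed

lemma g_bounds:
  assumes "0 \<le> y" "y \<le> 1"
  shows "0 \<le> gfun s A1 y \<and> gfun s A1 y \<le> 1"
proof -
  obtain \<alpha> where a: "\<forall>n. \<alpha> n < s" "sadic_value s \<alpha> = y" using code_exists[OF s2 assms] by blast
  have d: "\<And>n. beta_seq A1 \<alpha> n < 2"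
  proof -
    fix n have "beta_seq A1 \<alpha> n \<le> 1" by (rule beta_le1)
    thus "beta_seq A1 \<alpha> n < 2" by linarith
  qed
  have "gfun s A1 y = sadic_value 2 (beta_seq A1 \<alpha>)" using g_eq[of \<alpha> A1] a by simp
  thus ?thesis using val_bounds[of 2 "beta_seq A1 \<alpha>"] d by simp
qed

lemma g_cyl:
  assumes "m < s ^ N" "real m / real s ^ N \<le> y" "y \<le> (real m + 1) / real s ^ N"
    "real m / real s ^ N \<le> y'" "y' \<le> (real m + 1) / real s ^ N"
  shows "\<bar>gfun s A1 y - gfun s A1 y'\<bar> \<le> 1 / 2 ^ N"
proof -
  obtain \<gamma> where g: "\<forall>n. \<gamma> n < s" "sadic_value s (alpha_cat s N m \<gamma>) = y"
    using cyl_code[OF s2 assms(1-3)] by blast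
  obtain \<gamma>' where g': "\<forall>n. \<gamma>' n < s" "sadic_value s (alpha_cat s N m \<gamma>') = y'"
    using cyl_code[OF s2 assms(1,4,5)] by blast
  have sp: "0 < s" using s2 by simp
  have e1: "gfun s A1 y = sadic_value 2 (beta_seq A1 (alpha_cat s N m \<gamma>))"
    using g_eq[of "alpha_cat s N m \<gamma>" A1] alpha_cat_digit[OF sp] g by simp
  have e2: "gfun s A1 y' = sadic_value 2 (beta_seq A1 (alpha_cat s N m \<gamma>'))"
    using g_eq[of "alpha_cat s N m \<gamma>'" A1] alpha_cat_digit[OF sp] g' by simp
  show ?thesis unfolding e1 e2
    by (rule bval_prefix_close[OF s2]) (rule alpha_cat_prefix)
qed

lemma cell:
  assumes "0 \<le> y" "y \<le> 1"
  shows "\<exists>m<s ^ N. real m \<le> real s ^ N * y \<and> real s ^ N * y \<le> real m + 1"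
proof (cases "y = 1")
  case True
  have "0 < s ^ N" using s2 by simp
  hence "s ^ N - 1 + 1 = s ^ N" by simp
  hence "real (s ^ N - 1 + 1) = real (s ^ N)" by (rule arg_cong)
  hence "real (s ^ N - 1) + 1 = real s ^ N" by (simp only: of_nat_add of_nat_1 of_nat_power)
  thus ?thesis using True \<open>0 < s ^ N\<close> by (intro exI[of _ "s ^ N - 1"]) auto
next
  case False
  define X where "X = real s ^ N * y"
  have X0: "0 \<le> X" unfolding X_def using assms by simp
  have X1: "X < real s ^ N" unfolding X_def using assms False s2 by simp
  have f1: "real_of_int \<lfloor>X\<rfloor> \<le> X" "X < real_of_int \<lfloor>X\<rfloor> + 1" by linarith+
  have f0: "0 \<le> \<lfloor>X\<rfloor>" using X0 by simp
  have r: "real (nat \<lfloor>X\<rfloor>) = real_of_int \<lfloor>X\<rfloor>" using f0 by simp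
  have "real (nat \<lfloor>X\<rfloor>) < real (s ^ N)" using r f1(1) X1 by (simp only: of_nat_power)
  hence "nat \<lfloor>X\<rfloor> < s ^ N" by (simp only: of_nat_less_iff)
  thus ?thesis using r f1 unfolding X_def[symmetric] by (intro exI[of _ "nat \<lfloor>X\<rfloor>"]) auto
qed

lemma g_cyl':
  assumes "m < s ^ N" "real m \<le> real s ^ N * y" "real s ^ N * y \<le> real m + 1"
    "real m \<le> real s ^ N * y'" "real s ^ N * y' \<le> real m + 1"
  shows "\<bar>gfun s A1 y - gfun s A1 y'\<bar> \<le> 1 / 2 ^ N"
proof -
  have pp: "real s ^ N > 0" using s2 by simp
  show ?thesis
    by (rule g_cyl[OF assms(1)]) (use assms(2-5) pp in \<open>simp_all add: pos_divide_le_eq pos_le_divide_eq mult.commute\<close>)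
qed

lemma g_cont: "continuous_on {0..1} (gfun s A1)"
  unfolding continuous_on_iff
proof (intro ballI allI impI)
  fix y e :: real
  assume y: "y \<in> {0..1}" and e: "0 < e"
  obtain N where N: "(1/2::real) ^ N < e / 2" using real_arch_pow_inv[of "e/2" "1/2"] e by auto
  have pp: "real s ^ N > 0" using s2 by simp
  have hN: "1 / 2 ^ N = (1/2::real) ^ N" by (simp add: power_divide)
  show "\<exists>d>0. \<forall>y'\<in>{0..1}. dist y' y < d \<longrightarrow> dist (gfun s A1 y') (gfun s A1 y) < e"
  proof (intro exI[of _ "1 / real s ^ N"] conjI ballI impI)
    show "0 < 1 / real s ^ N" using pp by simp
    fix y' assume y': "y' \<in> {0..1}" and d: "dist y' y < 1 / real s ^ N"
    obtain m where m: "m < s ^ N" "real m \<le> real s ^ N * y" "real s ^ N * y \<le> real m + 1"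
      using cell[of y N] y by auto
    obtain m' where m': "m' < s ^ N" "real m' \<le> real s ^ N * y'" "real s ^ N * y' \<le> real m' + 1"
      using cell[of y' N] y' by auto
    have "\<bar>y' - y\<bar> < 1 / real s ^ N" using d by (simp add: dist_real_def)
    hence "real s ^ N * \<bar>y' - y\<bar> < 1" using pp by (simp add: field_simps)
    hence dd: "\<bar>real s ^ N * y' - real s ^ N * y\<bar> < 1" using pp
      by (metis abs_mult abs_of_pos right_diff_distrib)
    have "real m' < real m + 2" "real m < real m' + 2" using m m' dd by linarith+
    hence c: "m' \<le> m + 1" "m \<le> m' + 1" by linarith+
    have nn: "(1/2::real) ^ N \<ge> 0" by simp
    have b1: "1 / 2 ^ N < e" using N hN nn by linarith
    have b2: "1 / 2 ^ N + 1 / 2 ^ N < e" using N hN by linarith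
    consider "m' = m" | "m' = m + 1" | "m = m' + 1" using c by linarith
    thus "dist (gfun s A1 y') (gfun s A1 y) < e"
    proof cases
      case 1
      have "\<bar>gfun s A1 y' - gfun s A1 y\<bar> \<le> 1 / 2 ^ N"
        by (rule g_cyl'[OF m(1)]) (use m m' 1 in auto)
      thus ?thesis using b1 by (simp add: dist_real_def)
    next
      case 2
      define z where "z = real m' / real s ^ N"
      have zz: "real s ^ N * z = real m'" unfolding z_def using pp by simp
      have "\<bar>gfun s A1 y' - gfun s A1 z\<bar> \<le> 1 / 2 ^ N"
        by (rule g_cyl'[OF m'(1)]) (use m' zz in auto)
      moreover have "\<bar>gfun s A1 z - gfun s A1 y\<bar> \<le> 1 / 2 ^ N"
        by (rule g_cyl'[OF m(1)]) (use m zz 2 in auto)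
      ultimately show ?thesis using b2 by (simp add: dist_real_def)
    next
      case 3
      define z where "z = real m / real s ^ N"
      have zz: "real s ^ N * z = real m" unfolding z_def using pp by simp
      have "\<bar>gfun s A1 y' - gfun s A1 z\<bar> \<le> 1 / 2 ^ N"
        by (rule g_cyl'[OF m'(1)]) (use m' zz 3 in auto)
      moreover have "\<bar>gfun s A1 z - gfun s A1 y\<bar> \<le> 1 / 2 ^ N"
        by (rule g_cyl'[OF m(1)]) (use m zz in auto)
      ultimately show ?thesis using b2 by (simp add: dist_real_def)
    qed
  qed
qed

end

lemma f_eq:
  assumes s2: "2 \<le> s" and hs: "strict_mono_on {0..1} hs" "hs ` {0..1} = {0..1}"
    and x: "x \<in> {0..1}"
  shows "f_map s A1 hs h2 x = h2 (gfun s A1 (the_inv_into {0..1} hs x))"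
proof -
  have inj: "inj_on hs {0..1}" using hs(1) by (rule strict_mono_on_imp_inj_on)
  define y where "y = the_inv_into {0..1} hs x"
  have y: "y \<in> {0..1}" unfolding y_def using the_inv_into_into[OF inj, of x "{0..1}"] x hs(2) by auto
  have hy: "hs y = x" unfolding y_def using f_the_inv_into_f[OF inj, of x] x hs(2) by auto
  obtain \<alpha>0 where a0: "\<forall>n. \<alpha>0 n < s" "sadic_value s \<alpha>0 = y" using code_exists[OF s2, of y] y by auto
  define \<alpha>1 where "\<alpha>1 = (SOME \<alpha>. digit_seq s \<alpha> \<and> hs (sadic_value s \<alpha>) = x)"
  have "digit_seq s \<alpha>0 \<and> hs (sadic_value s \<alpha>0) = x" using a0 hy unfolding digit_seq_def by simp
  hence a1: "digit_seq s \<alpha>1 \<and> hs (sadic_value s \<alpha>1) = x" unfolding \<alpha>1_def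
    by (rule someI[where P="\<lambda>\<alpha>. digit_seq s \<alpha> \<and> hs (sadic_value s \<alpha>) = x"])
  have d1: "\<And>n. \<alpha>1 n < s" using a1 unfolding digit_seq_def by simp
  have v1: "sadic_value s \<alpha>1 \<in> {0..1}" using val_bounds[OF s2 d1] by simp
  have "hs (sadic_value s \<alpha>1) = hs y" using a1 hy by simp
  hence "sadic_value s \<alpha>1 = y" using inj_onD[OF inj _ v1 y] by blast
  hence "gfun s A1 y = sadic_value 2 (beta_seq A1 \<alpha>1)" using g_eq[OF s2, of \<alpha>1 A1] d1 by simp
  thus ?thesis unfolding f_map_def y_def[symmetric] \<alpha>1_def[symmetric] by simp
qed

lemma f_cont:
  assumes s2: "2 \<le> s"
    and "continuous_on {0..1} hs" and "strict_mono_on {0..1} hs" and "hs ` {0..1} = {0..1}"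
    and "continuous_on {0..1} h2"
  shows "continuous_on {0..1} (f_map s A1 hs h2)"
proof -
  have inj: "inj_on hs {0..1}" using assms(3) by (rule strict_mono_on_imp_inj_on)
  have c1: "continuous_on {0..1} (the_inv_into {0..1} hs)"
    using continuous_on_inv_into[OF assms(2) _ inj] assms(4) by simp
  have i1: "the_inv_into {0..1} hs ` {0..1} \<subseteq> {0..1}"
    using the_inv_into_into[OF inj] assms(4) by blast
  have c2: "continuous_on {0..1} (\<lambda>x. gfun s A1 (the_inv_into {0..1} hs x))"
    by (rule continuous_on_compose2[OF g_cont[OF s2] c1 i1])
  have i2: "(\<lambda>x. gfun s A1 (the_inv_into {0..1} hs x)) ` {0..1} \<subseteq> {0..1}"
  proof (rule image_subsetI)
    fix x :: real assume "x \<in> {0..1}"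
    hence "the_inv_into {0..1} hs x \<in> {0..1}" using i1 by blast
    thus "gfun s A1 (the_inv_into {0..1} hs x) \<in> {0..1}" using g_bounds[OF s2, of _ A1] by simp
  qed
  have c3: "continuous_on {0..1} (\<lambda>x. h2 (gfun s A1 (the_inv_into {0..1} hs x)))"
    by (rule continuous_on_compose2[OF assms(5) c2 i2])
  show ?thesis
  proof (rule continuous_on_eq[OF c3])
    fix x :: real assume "x \<in> {0..1}"
    thus "h2 (gfun s A1 (the_inv_into {0..1} hs x)) = f_map s A1 hs h2 x"
      using f_eq[OF s2 assms(3,4)] by simp
  qed
qed

fun chg :: "nat \<Rightarrow> nat \<Rightarrow> nat" where
  "chg 0 k = 0"
| "chg (Suc 0) k = 0"
| "chg (Suc (Suc n)) k = chg (Suc n) (k div 2) + (if k mod 2 = (k div 2) mod 2 then 0 else 1)"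

lemma chg_step:
  assumes "1 \<le> n" "c < 2"
  shows "chg (Suc n) (k * 2 + c) = chg n k + (if c = k mod 2 then 0 else 1)"
proof -
  obtain n0 where n: "n = Suc n0" using assms by (cases n) auto
  have "(k * 2 + c) div 2 = k" "(k * 2 + c) mod 2 = c" using assms(2) by auto
  thus ?thesis unfolding n by simp
qed

lemma sum_group:
  fixes F :: "nat \<Rightarrow> 'a::comm_monoid_add"
  shows "(\<Sum>m<K * b. F m) = (\<Sum>m'<K. \<Sum>d<b. F (m' * b + d))"
proof -
  have "(\<Sum>m<K * b. F m) = (\<Sum>m'<K. sum F {m' * b..<m' * b + b})" by (rule sum.nat_group[symmetric])
  also have "\<dots> = (\<Sum>m'<K. \<Sum>d<b. F (m' * b + d))"
  proof (rule sum.cong[OF refl])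
    fix m'
    have "sum F {m' * b..<m' * b + b} = sum F {0 + m' * b..<b + m' * b}" by (simp add: add.commute)
    also have "\<dots> = (\<Sum>d\<in>{0..<b}. F (d + m' * b))" by (rule sum.shift_bounds_nat_ivl)
    also have "\<dots> = (\<Sum>d<b. F (m' * b + d))" by (simp add: add.commute atLeast0LessThan)
    finally show "sum F {m' * b..<m' * b + b} = (\<Sum>d<b. F (m' * b + d))" .
  qed
  finally show ?thesis .
qed

lemma comb:
  assumes s3: "3 \<le> s" and d0: "d0 < s" "d0 \<notin> A1" and d1: "d1 < s" "d1 \<in> A1"
  shows "1 \<le> N \<Longrightarrow> (\<And>k. 0 \<le> \<phi> k) \<Longrightarrow>
    (\<Sum>k<2^N. 2 ^ (chg N k) * \<phi> k) \<le> (\<Sum>m<s^N. \<phi> (Bidx s A1 N m) :: real)"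
proof (induction N arbitrary: \<phi>)
  case 0 then show ?case by simp
next
  case (Suc n)
  show ?case
  proof (cases n)
    case 0
    have ne: "d0 \<noteq> d1" using d0 d1 by auto
    have "(\<Sum>m\<in>{d0, d1}. \<phi> (Bidx s A1 (Suc 0) m)) \<le> (\<Sum>m<s. \<phi> (Bidx s A1 (Suc 0) m))"
      by (rule sum_mono2) (use d0 d1 Suc.prems in auto)
    moreover have "(\<Sum>m\<in>{d0, d1}. \<phi> (Bidx s A1 (Suc 0) m)) = \<phi> 0 + \<phi> 1"
      using ne d0 d1 by simp
    moreover have "(\<Sum>k<2^Suc 0. 2 ^ (chg (Suc 0) k) * \<phi> k) = \<phi> 0 + \<phi> 1"
      by (simp add: numeral_2_eq_2)
    ultimately show ?thesis unfolding 0 by simp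
  next
    case (Suc n0)
    have n1: "1 \<le> n" using Suc by simp
    define \<psi> where "\<psi> p = \<phi> (p * 2 + p mod 2) + 2 * \<phi> (p * 2 + (1 - p mod 2))" for p
    have \<psi>0: "0 \<le> \<psi> p" for p unfolding \<psi>_def using Suc.prems(2) by (simp add: add_nonneg_nonneg)
    have IH: "(\<Sum>k<2^n. 2 ^ (chg n k) * \<psi> k) \<le> (\<Sum>m<s^n. \<psi> (Bidx s A1 n m))"
      by (rule Suc.IH[OF n1]) (rule \<psi>0)
    have L: "(\<Sum>k<2^Suc n. 2 ^ (chg (Suc n) k) * \<phi> k) = (\<Sum>k<2^n. 2 ^ (chg n k) * \<psi> k)"
    proof -
      have "(\<Sum>k<2^Suc n. 2 ^ (chg (Suc n) k) * \<phi> k) = (\<Sum>k<2^n * 2. 2 ^ (chg (Suc n) k) * \<phi> k)"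
        by (simp add: mult.commute)
      also have "\<dots> = (\<Sum>k<2^n. \<Sum>c<2. 2 ^ (chg (Suc n) (k * 2 + c)) * \<phi> (k * 2 + c))"
        by (rule sum_group)
      also have "\<dots> = (\<Sum>k<2^n. 2 ^ (chg n k) * \<psi> k)"
      proof (rule sum.cong[OF refl])
        fix k
        have c0: "chg (Suc n) (k * 2 + 0) = chg n k + (if 0 = k mod 2 then 0 else 1)" by (rule chg_step[OF n1]) simp
        have c1: "chg (Suc n) (k * 2 + 1) = chg n k + (if 1 = k mod 2 then 0 else 1)" by (rule chg_step[OF n1]) simp
        have "(\<Sum>c<2. 2 ^ (chg (Suc n) (k * 2 + c)) * \<phi> (k * 2 + c)) =
              2 ^ (chg (Suc n) (k * 2 + 0)) * \<phi> (k * 2 + 0) + 2 ^ (chg (Suc n) (k * 2 + 1)) * \<phi> (k * 2 + 1)"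
          by (simp add: numeral_2_eq_2)
        also have "\<dots> = 2 ^ (chg n k) * \<psi> k"
        proof (cases "k mod 2 = 0")
          case True
          then show ?thesis unfolding c0 c1 \<psi>_def by (simp add: algebra_simps power_add)
        next
          case False
          hence "k mod 2 = 1" by simp
          then show ?thesis unfolding c0 c1 \<psi>_def by (simp add: algebra_simps power_add)
        qed
        finally show "(\<Sum>c<2. 2 ^ (chg (Suc n) (k * 2 + c)) * \<phi> (k * 2 + c)) = 2 ^ (chg n k) * \<psi> k" .
      qed
      finally show ?thesis .
    qed
    have R: "(\<Sum>m<s^n. \<psi> (Bidx s A1 n m)) \<le> (\<Sum>m<s^Suc n. \<phi> (Bidx s A1 (Suc n) m))"
    proof -
      have "(\<Sum>m<s^Suc n. \<phi> (Bidx s A1 (Suc n) m)) = (\<Sum>m<s^n * s. \<phi> (Bidx s A1 (Suc n) m))"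
        by (simp add: mult.commute)
      also have "\<dots> = (\<Sum>m'<s^n. \<Sum>d<s. \<phi> (Bidx s A1 (Suc n) (m' * s + d)))"
        by (rule sum_group)
      finally have e: "(\<Sum>m<s^Suc n. \<phi> (Bidx s A1 (Suc n) m)) = (\<Sum>m'<s^n. \<Sum>d<s. \<phi> (Bidx s A1 (Suc n) (m' * s + d)))" .
      have "\<psi> (Bidx s A1 n m') \<le> (\<Sum>d<s. \<phi> (Bidx s A1 (Suc n) (m' * s + d)))" for m'
      proof -
        define p where "p = Bidx s A1 n m'"
        define a where "a = m' mod s"
        have as: "a < s" unfolding a_def using s3 by simp
        have Bd: "Bidx s A1 (Suc n) (m' * s + d) = p * 2 + (if d = a then p mod 2 else 1 - p mod 2)" if "d < s" for d
        proof -
          have q: "(m' * s + d) div s = m'" and r: "(m' * s + d) mod s = d" using that by auto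
          have "Bidx s A1 (Suc (Suc n0)) (m' * s + d) = 2 * Bidx s A1 (Suc n0) ((m' * s + d) div s) +
             (if (m' * s + d) mod s = ((m' * s + d) div s) mod s then Bidx s A1 (Suc n0) ((m' * s + d) div s) mod 2
              else 1 - Bidx s A1 (Suc n0) ((m' * s + d) div s) mod 2)" by (rule Bidx.simps(3))
          thus ?thesis unfolding q r p_def a_def Suc by (simp add: mult.commute)
        qed
        define j1 where "j1 = (if a = 0 then 1 else 0::nat)"
        define j2 where "j2 = (if a = 2 then 1 else 2::nat)"
        have j: "j1 \<noteq> a" "j2 \<noteq> a" "j1 \<noteq> j2" "j1 < s" "j2 < s" unfolding j1_def j2_def using s3 by auto
        have "(\<Sum>d\<in>{a, j1, j2}. \<phi> (Bidx s A1 (Suc n) (m' * s + d))) \<le> (\<Sum>d<s. \<phi> (Bidx s A1 (Suc n) (m' * s + d)))"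
          by (rule sum_mono2) (use j as Suc.prems(2) in auto)
        moreover have "(\<Sum>d\<in>{a, j1, j2}. \<phi> (Bidx s A1 (Suc n) (m' * s + d))) = \<psi> p"
          using j as Bd[of a] Bd[of j1] Bd[of j2] unfolding \<psi>_def by simp
        ultimately show ?thesis unfolding p_def by simp
      qed
      hence "(\<Sum>m<s^n. \<psi> (Bidx s A1 n m)) \<le> (\<Sum>m'<s^n. \<Sum>d<s. \<phi> (Bidx s A1 (Suc n) (m' * s + d)))"
        by (rule sum_mono)
      thus ?thesis unfolding e .
    qed
    show ?thesis using L IH R by linarith
  qed
qed

lemma chg_split:
  assumes "1 \<le> L"
  shows "1 \<le> M \<Longrightarrow> y < 2 ^ M \<Longrightarrow> chg L x + chg M y \<le> chg (L + M) (x * 2 ^ M + y)"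
proof (induction M arbitrary: y)
  case 0 then show ?case by simp
next
  case (Suc M)
  show ?case
  proof (cases "M = 0")
    case True
    hence y2: "y < 2" using Suc.prems by simp
    have "chg (Suc L) (x * 2 + y) = chg L x + (if y = x mod 2 then 0 else 1)" by (rule chg_step[OF assms y2])
    thus ?thesis using True by simp
  next
    case False
    hence M1: "1 \<le> M" by simp
    define y' where "y' = y div 2"
    define c where "c = y mod 2"
    have c2: "c < 2" unfolding c_def by simp
    have yy: "y = y' * 2 + c" unfolding y'_def c_def by simp
    have y'M: "y' < 2 ^ M" using Suc.prems(2) unfolding y'_def by (simp add: less_mult_imp_div_less mult.commute)
    have e1: "x * 2 ^ Suc M + y = (x * 2 ^ M + y') * 2 + c" unfolding yy by (simp add: algebra_simps)
    have LM: "1 \<le> L + M" using assms by simp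
    obtain M' where M': "M = Suc M'" using M1 by (cases M) auto
    have "x * 2 ^ M + y' = y' + 2 * (x * 2 ^ M')" unfolding M' by simp
    hence ev: "(x * 2 ^ M + y') mod 2 = y' mod 2" by (simp only: mod_mult_self2)
    have "chg (Suc (L + M)) ((x * 2 ^ M + y') * 2 + c) = chg (L + M) (x * 2 ^ M + y') + (if c = (x * 2 ^ M + y') mod 2 then 0 else 1)"
      by (rule chg_step[OF LM c2])
    hence A: "chg (L + Suc M) (x * 2 ^ Suc M + y) = chg (L + M) (x * 2 ^ M + y') + (if c = y' mod 2 then 0 else 1)"
      unfolding e1 ev by simp
    have B: "chg (Suc M) y = chg M y' + (if c = y' mod 2 then 0 else 1)"
      unfolding yy by (rule chg_step[OF M1 c2])
    have "chg L x + chg M y' \<le> chg (L + M) (x * 2 ^ M + y')" by (rule Suc.IH[OF M1 y'M])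
    thus ?thesis unfolding A B by simp
  qed
qed

lemma chg_zero:
  "1 \<le> M \<Longrightarrow> y < 2 ^ M \<Longrightarrow> chg M y = 0 \<Longrightarrow> y = 0 \<or> y = 2 ^ M - 1"
proof (induction M arbitrary: y)
  case 0 then show ?case by simp
next
  case (Suc M)
  show ?case
  proof (cases "M = 0")
    case True
    then show ?thesis using Suc.prems by auto
  next
    case False
    hence M1: "1 \<le> M" by simp
    define y' where "y' = y div 2"
    define c where "c = y mod 2"
    have c2: "c < 2" unfolding c_def by simp
    have yy: "y = y' * 2 + c" unfolding y'_def c_def by simp
    have y'M: "y' < 2 ^ M" using Suc.prems(2) unfolding y'_def by (simp add: less_mult_imp_div_less mult.commute)
    have B: "chg (Suc M) y = chg M y' + (if c = y' mod 2 then 0 else 1)"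
      unfolding yy by (rule chg_step[OF M1 c2])
    hence z: "chg M y' = 0" and cc: "c = y' mod 2" using Suc.prems(3) by (auto split: if_splits)
    from Suc.IH[OF M1 y'M z] show ?thesis
    proof
      assume "y' = 0" thus ?thesis using cc yy by simp
    next
      assume a: "y' = 2 ^ M - 1"
      obtain M' where M': "M = Suc M'" using M1 by (cases M) auto
      have q: "(2::nat) ^ M = 2 * 2 ^ M'" unfolding M' by simp
      have q1: "(1::nat) \<le> 2 ^ M'" by simp
      have p: "(2::nat) ^ M \<ge> 2" using q q1 by linarith
      have "(2 * 2 ^ M' - 1) mod 2 = (1::nat)" using q1 by presburger
      hence "y' mod 2 = 1" unfolding a q .
      hence "c = 1" using cc by simp
      hence "y = (2 ^ M - 1) * 2 + 1" using yy a by simp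
      also have "\<dots> = 2 ^ Suc M - 1" using p by (simp add: algebra_simps)
      finally show ?thesis by simp
    qed
  qed
qed

definition lam :: "(real \<Rightarrow> real) \<Rightarrow> nat \<Rightarrow> nat \<Rightarrow> real" where
  "lam h N k = h (real (Suc k) / 2 ^ N) - h (real k / 2 ^ N)"

definition Mj :: "(real \<Rightarrow> real) \<Rightarrow> nat \<Rightarrow> nat \<Rightarrow> real" where
  "Mj h j N = (\<Sum>k<2^N. if chg N k < j then lam h N k else 0)"

definition EE :: "(real \<Rightarrow> real) \<Rightarrow> nat \<Rightarrow> nat \<Rightarrow> real" where
  "EE h L M = (\<Sum>x<2^L. lam h (L + M) (x * 2 ^ M) + lam h (L + M) (x * 2 ^ M + (2 ^ M - 1)))"

context
  fixes h2 :: "real \<Rightarrow> real"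
  assumes hc: "continuous_on {0..1} h2" and hm: "strict_mono_on {0..1} h2" and hi: "h2 ` {0..1} = {0..1}"
begin

lemma h2_mono: "x \<in> {0..1} \<Longrightarrow> y \<in> {0..1} \<Longrightarrow> x \<le> y \<Longrightarrow> h2 x \<le> h2 y"
proof (cases "x = y")
  case False
  assume "x \<in> {0..1}" "y \<in> {0..1}" "x \<le> y"
  hence "x < y" using False by simp
  hence "h2 x < h2 y" using strict_mono_onD[OF hm] \<open>x \<in> {0..1}\<close> \<open>y \<in> {0..1}\<close> by blast
  thus ?thesis by simp
qed simp

lemma h2_range: "x \<in> {0..1} \<Longrightarrow> h2 x \<in> {0..1}"
  using hi by blast

lemma h2_0: "h2 0 = 0"
proof -
  obtain z where z: "z \<in> {0..1}" "h2 z = 0" using hi by (metis atLeastAtMost_iff image_iff order_refl zero_le_one)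
  have "h2 0 \<le> h2 z" using h2_mono[of 0 z] z by simp
  moreover have "h2 0 \<ge> 0" using h2_range[of 0] by simp
  ultimately show ?thesis using z by simp
qed

lemma h2_1: "h2 1 = 1"
proof -
  obtain z where z: "z \<in> {0..1}" "h2 z = 1" using hi by (metis atLeastAtMost_iff image_iff order_refl zero_le_one)
  have "h2 z \<le> h2 1" using h2_mono[of z 1] z by simp
  moreover have "h2 1 \<le> 1" using h2_range[of 1] by simp
  ultimately show ?thesis using z by simp
qed

lemma lam_nonneg: "k < 2 ^ N \<Longrightarrow> 0 \<le> lam h2 N k"
proof -
  assume k: "k < 2 ^ N"
  have "real (Suc k) \<le> 2 ^ N" using k by (metis Suc_leI of_nat_le_iff of_nat_numeral of_nat_power)
  hence a: "real (Suc k) / 2 ^ N \<le> 1" by simp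
  have b: "real k / 2 ^ N \<le> real (Suc k) / 2 ^ N" by (simp add: divide_right_mono)
  have c: "real k / 2 ^ N \<le> 1" using a b by linarith
  have "h2 (real k / 2 ^ N) \<le> h2 (real (Suc k) / 2 ^ N)"
    by (rule h2_mono) (use a b c in auto)
  thus ?thesis unfolding lam_def by simp
qed

lemma lam_tele: "(\<Sum>y<n. lam h2 N (a + y)) = h2 (real (a + n) / 2 ^ N) - h2 (real a / 2 ^ N)"
proof -
  have "(\<Sum>y<n. lam h2 N (a + y)) = (\<Sum>y<n. (\<lambda>i. h2 (real (a + i) / 2 ^ N)) (Suc y) - (\<lambda>i. h2 (real (a + i) / 2 ^ N)) y)"
    unfolding lam_def by simp
  also have "\<dots> = h2 (real (a + n) / 2 ^ N) - h2 (real (a + 0) / 2 ^ N)" by (rule sum_lessThan_telescope)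
  finally show ?thesis by simp
qed

lemma lam_sum: "(\<Sum>k<2^N. lam h2 N k) = 1"
  using lam_tele[where n="2^N" and N=N and a=0] h2_0 h2_1 by simp

lemma lam_sub_sum: "(\<Sum>y<2^M. lam h2 (L + M) (x * 2 ^ M + y)) = lam h2 L x"
proof -
  have "(\<Sum>y<2^M. lam h2 (L + M) (x * 2 ^ M + y)) = h2 (real (x * 2 ^ M + 2 ^ M) / 2 ^ (L + M)) - h2 (real (x * 2 ^ M) / 2 ^ (L + M))"
    by (rule lam_tele)
  also have "real (x * 2 ^ M + 2 ^ M) / 2 ^ (L + M) = real (Suc x) / 2 ^ L"
    by (simp add: power_add field_simps)
  also have "real (x * 2 ^ M) / 2 ^ (L + M) = real x / 2 ^ L"
    by (simp add: power_add field_simps)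
  finally show ?thesis unfolding lam_def .
qed

lemma Mj_step:
  assumes L1: "1 \<le> L" and M1: "1 \<le> M"
  shows "Mj h2 (Suc j) (L + M) \<le> Mj h2 j L + EE h2 L M"
proof -
  define G where "G k = (if chg (L + M) k < Suc j then lam h2 (L + M) k else 0)" for k
  have "Mj h2 (Suc j) (L + M) = (\<Sum>k<2^L * 2^M. G k)" unfolding Mj_def G_def by (simp add: power_add)
  also have "\<dots> = (\<Sum>x<2^L. \<Sum>y<2^M. G (x * 2^M + y))" by (rule sum_group)
  also have "\<dots> \<le> (\<Sum>x<2^L. \<Sum>y<2^M. (if chg L x < j then lam h2 (L + M) (x * 2^M + y) else 0)
        + (if y = 0 then lam h2 (L + M) (x * 2^M + y) else 0)
        + (if y = 2^M - 1 then lam h2 (L + M) (x * 2^M + y) else 0))"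
  proof (intro sum_mono)
    fix x y :: nat assume x: "x \<in> {..<2^L}" and y: "y \<in> {..<2^M}"
    have k: "x * 2^M + y < 2 ^ (L + M)"
    proof -
      have "x * 2^M + y < x * 2^M + 2^M" using y by simp
      also have "\<dots> = (x + 1) * 2^M" by simp
      also have "\<dots> \<le> 2^L * 2^M" using x by (intro mult_right_mono) auto
      finally show ?thesis by (simp add: power_add)
    qed
    have l0: "0 \<le> lam h2 (L + M) (x * 2^M + y)" by (rule lam_nonneg[OF k])
    have i1: "0 \<le> (if chg L x < j then lam h2 (L + M) (x * 2^M + y) else 0)" using l0 by simp
    have i2: "0 \<le> (if y = 0 then lam h2 (L + M) (x * 2^M + y) else 0)" using l0 by (cases "y = 0") auto
    have i3: "0 \<le> (if y = 2^M - 1 then lam h2 (L + M) (x * 2^M + y) else 0)" using l0 by (cases "y = 2^M - 1") auto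
    show "G (x * 2^M + y) \<le> (if chg L x < j then lam h2 (L + M) (x * 2^M + y) else 0)
        + (if y = 0 then lam h2 (L + M) (x * 2^M + y) else 0)
        + (if y = 2^M - 1 then lam h2 (L + M) (x * 2^M + y) else 0)"
    proof (cases "chg (L + M) (x * 2^M + y) < Suc j")
      case False
      have "G (x * 2^M + y) = 0" unfolding G_def using False by simp
      then show ?thesis using i1 i2 i3 by linarith
    next
      case True
      show ?thesis
      proof (cases "y = 0 \<or> y = 2^M - 1")
        case True
        have g: "G (x * 2^M + y) = lam h2 (L + M) (x * 2^M + y)" unfolding G_def using \<open>chg (L + M) (x * 2^M + y) < Suc j\<close> by simp
        show ?thesis
        proof (cases "y = 0")
          case True
          hence "(if y = 0 then lam h2 (L + M) (x * 2^M + y) else 0) = lam h2 (L + M) (x * 2^M + y)" by simp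
          thus ?thesis using g i1 i3 by linarith
        next
          case False
          hence "y = 2^M - 1" using \<open>y = 0 \<or> y = 2^M - 1\<close> by simp
          hence "(if y = 2^M - 1 then lam h2 (L + M) (x * 2^M + y) else 0) = lam h2 (L + M) (x * 2^M + y)" by simp
          thus ?thesis using g i1 i2 by linarith
        qed
      next
        case False
        hence "chg M y \<noteq> 0" using chg_zero[OF M1] y by auto
        moreover have "chg L x + chg M y \<le> chg (L + M) (x * 2 ^ M + y)" using chg_split[OF L1 M1] y by simp
        ultimately have "chg L x < j" using True by linarith
        hence "(if chg L x < j then lam h2 (L + M) (x * 2^M + y) else 0) = lam h2 (L + M) (x * 2^M + y)" by simp
        moreover have "G (x * 2^M + y) = lam h2 (L + M) (x * 2^M + y)" unfolding G_def using \<open>chg (L + M) (x * 2^M + y) < Suc j\<close> by simp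
        ultimately show ?thesis using i2 i3 by linarith
      qed
    qed
  qed
  also have "\<dots> = (\<Sum>x<2^L. (if chg L x < j then lam h2 L x else 0)
        + (lam h2 (L + M) (x * 2 ^ M) + lam h2 (L + M) (x * 2 ^ M + (2 ^ M - 1))))"
  proof (rule sum.cong[OF refl])
    fix x :: nat
    have p: "0 < (2::nat) ^ M" by simp
    have s1: "(\<Sum>y<2^M. (if chg L x < j then lam h2 (L + M) (x * 2^M + y) else 0)) = (if chg L x < j then lam h2 L x else 0)"
      using lam_sub_sum[where M=M and L=L and x=x] by simp
    have s2: "(\<Sum>y<2^M. (if y = 0 then lam h2 (L + M) (x * 2^M + y) else 0)) = lam h2 (L + M) (x * 2 ^ M)"
      using p by (simp add: sum.delta)
    have s3: "(\<Sum>y<2^M. (if y = 2^M - 1 then lam h2 (L + M) (x * 2^M + y) else 0)) = lam h2 (L + M) (x * 2 ^ M + (2 ^ M - 1))"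
      using p by (simp add: sum.delta)
    show "(\<Sum>y<2^M. (if chg L x < j then lam h2 (L + M) (x * 2^M + y) else 0)
        + (if y = 0 then lam h2 (L + M) (x * 2^M + y) else 0)
        + (if y = 2^M - 1 then lam h2 (L + M) (x * 2^M + y) else 0)) =
        (if chg L x < j then lam h2 L x else 0) + (lam h2 (L + M) (x * 2 ^ M) + lam h2 (L + M) (x * 2 ^ M + (2 ^ M - 1)))"
      unfolding sum.distrib s1 s2 s3 by simp
  qed
  also have "\<dots> = Mj h2 j L + EE h2 L M" unfolding Mj_def EE_def sum.distrib ..
  finally show ?thesis .
qed

end

context
  fixes h2 :: "real \<Rightarrow> real"
  assumes hc: "continuous_on {0..1} h2" and hm: "strict_mono_on {0..1} h2" and hi: "h2 ` {0..1} = {0..1}"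
begin

lemma EE_eq:
  "EE h2 L M = (\<Sum>x<2^L. h2 (real x / 2^L + (1/2)^M / 2^L) - h2 (real x / 2^L)
       + (h2 (real (Suc x) / 2^L) - h2 (real (Suc x) / 2^L - (1/2)^M / 2^L)))"
  unfolding EE_def
proof (rule sum.cong[OF refl])
  fix x :: nat
  have p: "(1::nat) \<le> 2 ^ M" by simp
  have e1: "real (Suc (x * 2 ^ M)) / 2 ^ (L + M) = real x / 2^L + (1/2)^M / 2^L"
    by (simp add: power_add power_divide field_simps)
  have e0: "real (x * 2 ^ M) / 2 ^ (L + M) = real x / 2^L"
    by (simp add: power_add field_simps)
  have "Suc (x * 2 ^ M + (2 ^ M - 1)) = x * 2 ^ M + 2 ^ M" using p by simp
  hence e3: "real (Suc (x * 2 ^ M + (2 ^ M - 1))) / 2 ^ (L + M) = real (Suc x) / 2^L"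
    by (simp add: power_add field_simps)
  have n: "x * 2 ^ M + (2 ^ M - 1) + 1 = x * 2 ^ M + 2 ^ M" using p by simp
  have "real (x * 2 ^ M + (2 ^ M - 1)) + 1 = real x * 2 ^ M + 2 ^ M" using arg_cong[OF n, of real]
    by (simp only: of_nat_add of_nat_mult of_nat_power of_nat_numeral of_nat_1)
  hence r: "real (x * 2 ^ M + (2 ^ M - 1)) = real x * 2 ^ M + 2 ^ M - 1" by linarith
  have e2: "real (x * 2 ^ M + (2 ^ M - 1)) / 2 ^ (L + M) = real (Suc x) / 2^L - (1/2)^M / 2^L"
    unfolding r by (simp add: power_add power_divide field_simps)
  show "lam h2 (L + M) (x * 2 ^ M) + lam h2 (L + M) (x * 2 ^ M + (2 ^ M - 1)) =
    h2 (real x / 2^L + (1/2)^M / 2^L) - h2 (real x / 2^L)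
       + (h2 (real (Suc x) / 2^L) - h2 (real (Suc x) / 2^L - (1/2)^M / 2^L))"
    unfolding lam_def e0 e1 e2 e3 ..
qed

lemma EE_lim: "(\<lambda>M. EE h2 L M) \<longlonglongrightarrow> 0"
proof -
  have e: "(\<lambda>M. (1/2::real)^M / 2^L) \<longlonglongrightarrow> 0"
  proof -
    have "(\<lambda>M. (1/2::real)^M) \<longlonglongrightarrow> 0" by (intro LIMSEQ_power_zero) auto
    hence "(\<lambda>M. (1/2::real)^M / 2^L) \<longlonglongrightarrow> 0 / 2^L" by (intro tendsto_divide) auto
    thus ?thesis by simp
  qed
  have eb: "0 \<le> (1/2::real)^M / 2^L" "(1/2::real)^M / 2^L \<le> 1 / 2^L" for M
  proof -
    show "0 \<le> (1/2::real)^M / 2^L" by simp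
    have "(1/2::real)^M \<le> 1" by (simp add: power_le_one)
    thus "(1/2::real)^M / 2^L \<le> 1 / 2^L" by (simp add: divide_right_mono)
  qed
  have tm: "(\<lambda>M. h2 (real x / 2^L + (1/2)^M / 2^L) - h2 (real x / 2^L)
       + (h2 (real (Suc x) / 2^L) - h2 (real (Suc x) / 2^L - (1/2)^M / 2^L))) \<longlonglongrightarrow> 0"
    if x: "x \<in> {..<2^L}" for x :: nat
  proof -
    define a where "a = real x / 2^L"
    define b where "b = real (Suc x) / 2^L"
    have ba: "b = a + 1 / 2^L" unfolding a_def b_def by (simp add: add_divide_distrib)
    have a0: "0 \<le> a" unfolding a_def by simp
    have "real (Suc x) \<le> 2 ^ L" using x by (metis Suc_leI lessThan_iff of_nat_le_iff of_nat_numeral of_nat_power)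
    hence b1: "b \<le> 1" unfolding b_def by simp
    have pl: "0 < 1 / (2::real) ^ L" by simp
    have "a \<le> 1" using b1 ba pl by linarith
    hence ainS: "a \<in> {0..1}" using a0 by simp
    have binS: "b \<in> {0..1}" using a0 b1 ba pl by simp
    have t1: "(\<lambda>M. h2 (a + (1/2)^M / 2^L)) \<longlonglongrightarrow> h2 a"
    proof (rule continuous_on_tendsto_compose[OF hc _ ainS])
      show "(\<lambda>M. a + (1/2)^M / 2^L) \<longlonglongrightarrow> a" using tendsto_add[OF tendsto_const e, of a] by simp
      show "\<forall>\<^sub>F M in sequentially. a + (1/2)^M / 2^L \<in> {0..1}"
      proof (intro always_eventually allI)
        fix M
        have "0 \<le> a + (1/2)^M / 2^L" using eb(1)[of M] a0 by linarith
        moreover have "a + (1/2)^M / 2^L \<le> 1" using eb(2)[of M] b1 ba by linarith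
        ultimately show "a + (1/2)^M / 2^L \<in> {0..1}" by simp
      qed
    qed
    have t2: "(\<lambda>M. h2 (b - (1/2)^M / 2^L)) \<longlonglongrightarrow> h2 b"
    proof (rule continuous_on_tendsto_compose[OF hc _ binS])
      show "(\<lambda>M. b - (1/2)^M / 2^L) \<longlonglongrightarrow> b" using tendsto_diff[OF tendsto_const e, of b] by simp
      show "\<forall>\<^sub>F M in sequentially. b - (1/2)^M / 2^L \<in> {0..1}"
      proof (intro always_eventually allI)
        fix M
        have "0 \<le> b - (1/2)^M / 2^L" using eb(2)[of M] ba a0 by linarith
        moreover have "b - (1/2)^M / 2^L \<le> 1" using eb(1)[of M] b1 by linarith
        ultimately show "b - (1/2)^M / 2^L \<in> {0..1}" by simp
      qed
    qed
    have "(\<lambda>M. h2 (a + (1/2)^M / 2^L) - h2 a + (h2 b - h2 (b - (1/2)^M / 2^L))) \<longlonglongrightarrow> h2 a - h2 a + (h2 b - h2 b)"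
      by (intro tendsto_add tendsto_diff t1 t2 tendsto_const)
    thus ?thesis unfolding a_def b_def by simp
  qed
  have "(\<lambda>M. \<Sum>x<2^L. h2 (real x / 2^L + (1/2)^M / 2^L) - h2 (real x / 2^L)
       + (h2 (real (Suc x) / 2^L) - h2 (real (Suc x) / 2^L - (1/2)^M / 2^L))) \<longlonglongrightarrow> (\<Sum>x<(2::nat)^L. 0)"
    by (rule tendsto_sum) (rule tm)
  thus ?thesis unfolding EE_eq by simp
qed

lemma Mj_small: "0 < \<epsilon> \<Longrightarrow> \<exists>N0. \<forall>N\<ge>N0. Mj h2 j N < \<epsilon>"
proof (induction j arbitrary: \<epsilon>)
  case 0
  have "Mj h2 0 N = 0" for N unfolding Mj_def by simp
  then show ?case using 0 by auto
next
  case (Suc j)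
  have e2: "0 < \<epsilon> / 2" using Suc.prems by simp
  obtain L0 where L0: "\<forall>L\<ge>L0. Mj h2 j L < \<epsilon> / 2" using Suc.IH[OF e2] by blast
  define L where "L = max L0 1"
  have L1: "1 \<le> L" and LL: "Mj h2 j L < \<epsilon> / 2" unfolding L_def using L0 by auto
  have "\<forall>\<^sub>F M in sequentially. EE h2 L M < \<epsilon> / 2"
    using order_tendstoD(2)[OF EE_lim e2] .
  then obtain M0 where M0: "\<forall>M\<ge>M0. EE h2 L M < \<epsilon> / 2" unfolding eventually_sequentially by blast
  show ?case
  proof (intro exI allI impI)
    fix N assume N: "L + max M0 1 \<le> N"
    define M where "M = N - L"
    have NM: "N = L + M" and M1: "1 \<le> M" and MM: "M0 \<le> M" unfolding M_def using N by auto
    have "Mj h2 (Suc j) N \<le> Mj h2 j L + EE h2 L M" unfolding NM by (rule Mj_step[OF hc hm hi L1 M1])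
    also have "\<dots> < \<epsilon>" using LL M0 MM by force
    finally show "Mj h2 (Suc j) N < \<epsilon>" .
  qed
qed

lemma T_bound:
  assumes s3: "3 \<le> s" and d0: "d0 < s" "d0 \<notin> A1" and d1: "d1 < s" "d1 \<in> A1"
  shows "\<exists>N\<ge>1. 2 ^ j / 2 \<le> (\<Sum>m<s^N. lam h2 N (Bidx s A1 N m))"
proof -
  obtain N0 where N0: "\<forall>N\<ge>N0. Mj h2 j N < 1/2" using Mj_small[of "1/2" j] by auto
  define N where "N = max N0 1"
  have N1: "1 \<le> N" and MN: "Mj h2 j N < 1/2" unfolding N_def using N0 by auto
  define \<phi> where "\<phi> k = (if k < 2^N then lam h2 N k else 0)" for k
  have \<phi>0: "0 \<le> \<phi> k" for k unfolding \<phi>_def using lam_nonneg[OF hc hm hi] by simp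
  have c: "(\<Sum>k<2^N. 2 ^ (chg N k) * \<phi> k) \<le> (\<Sum>m<s^N. \<phi> (Bidx s A1 N m))"
    by (rule comb[OF s3 d0 d1 N1]) (rule \<phi>0)
  have r: "(\<Sum>m<s^N. \<phi> (Bidx s A1 N m)) = (\<Sum>m<s^N. lam h2 N (Bidx s A1 N m))"
    unfolding \<phi>_def using Bidx_lt by simp
  have l: "(\<Sum>k<2^N. 2 ^ (chg N k) * \<phi> k) = (\<Sum>k<2^N. 2 ^ (chg N k) * lam h2 N k)"
    unfolding \<phi>_def by simp
  have "(\<Sum>k<2^N. 2 ^ j * (lam h2 N k - (if chg N k < j then lam h2 N k else 0))) \<le> (\<Sum>k<2^N. 2 ^ (chg N k) * lam h2 N k)"
  proof (rule sum_mono)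
    fix k :: nat assume k: "k \<in> {..<2^N}"
    have l0: "0 \<le> lam h2 N k" using lam_nonneg[OF hc hm hi] k by simp
    show "2 ^ j * (lam h2 N k - (if chg N k < j then lam h2 N k else 0)) \<le> 2 ^ (chg N k) * lam h2 N k"
    proof (cases "chg N k < j")
      case True then show ?thesis using l0 by simp
    next
      case False
      hence "(2::real) ^ j \<le> 2 ^ (chg N k)" by (intro power_increasing) auto
      then show ?thesis using False l0 by (simp add: mult_right_mono)
    qed
  qed
  also have "(\<Sum>k<2^N. 2 ^ j * (lam h2 N k - (if chg N k < j then lam h2 N k else 0))) = 2 ^ j * (1 - Mj h2 j N)"
    unfolding Mj_def sum_distrib_left[symmetric] sum_subtractf lam_sum[OF hc hm hi] ..
  finally have "2 ^ j * (1 - Mj h2 j N) \<le> (\<Sum>m<s^N. lam h2 N (Bidx s A1 N m))" using c r l by linarith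
  moreover have "2 ^ j / 2 \<le> 2 ^ j * (1 - Mj h2 j N)" using MN by simp
  ultimately have "2 ^ j / 2 \<le> (\<Sum>m<s^N. lam h2 N (Bidx s A1 N m))" by linarith
  thus ?thesis using N1 by blast
qed

end

lemma tv_lower:
  fixes F :: "real \<Rightarrow> real"
  assumes a01: "\<And>m. m < K \<Longrightarrow> a m \<in> {0..1}" and b01: "\<And>m. m < K \<Longrightarrow> b m \<in> {0..1}"
    and ab: "\<And>m. m < K \<Longrightarrow> a m \<le> b m" and ba: "\<And>m. Suc m < K \<Longrightarrow> b m \<le> a (Suc m)"
  shows "ereal (\<Sum>m<K. \<bar>F (b m) - F (a m)\<bar>) \<le> total_variation F 0 1"
proof -
  define x where "x i = (if i = 0 then 0 else if 2 * K < i then 1 else if odd i then a ((i - 1) div 2) else b ((i - 2) div 2))" for i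
  have x0: "x 0 = 0" unfolding x_def by simp
  have xn: "x (2 * K + 1) = 1" unfolding x_def by simp
  have xa: "x (2 * m + 1) = a m" if "m < K" for m unfolding x_def using that by simp
  have xb: "x (2 * m + 2) = b m" if "m < K" for m unfolding x_def using that by simp
  have mono: "x i \<le> x (Suc i)" if i: "i < 2 * K + 1" for i
  proof -
    have "i = 0 \<or> (\<exists>m. i = 2 * m + 1) \<or> (\<exists>m. i = 2 * m + 2)" by presburger
    moreover
    { assume "i = 0"
      have ?thesis
      proof (cases "K = 0")
        case True then show ?thesis unfolding x_def using \<open>i = 0\<close> by simp
      next
        case False
        hence "x 1 = a 0" using xa[of 0] by simp
        thus ?thesis using a01[of 0] False \<open>i = 0\<close> x0 by simp
      qed }
    moreover
    { fix m assume m: "i = 2 * m + 1"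
      hence mK: "m < K" using i by simp
      have "Suc i = 2 * m + 2" using m by simp
      hence ?thesis using xa[OF mK] xb[OF mK] ab[OF mK] m by simp }
    moreover
    { fix m assume m: "i = 2 * m + 2"
      hence mK: "m < K" using i by simp
      have si: "Suc i = 2 * Suc m + 1" using m by simp
      have ?thesis
      proof (cases "Suc m < K")
        case True then show ?thesis using xa[OF True] xb[OF mK] ba[OF True] m si by simp
      next
        case False
        hence "Suc i = 2 * K + 1" using si mK by simp
        thus ?thesis using xn xb[OF mK] b01[OF mK] m by simp
      qed }
    ultimately show ?thesis by blast
  qed
  define g where "g i = \<bar>F (x (Suc i)) - F (x i)\<bar>" for i
  have "(\<Sum>m<K. \<bar>F (b m) - F (a m)\<bar>) = (\<Sum>m<K. g (2 * m + 1))"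
    unfolding g_def using xa xb by (intro sum.cong) auto
  also have "\<dots> = sum g ((\<lambda>m. 2 * m + 1) ` {..<K})"
    by (rule sum.reindex[symmetric, unfolded comp_def]) (auto simp: inj_on_def)
  also have "\<dots> \<le> sum g {..<2 * K + 1}"
    by (rule sum_mono2) (auto simp: g_def)
  finally have le: "(\<Sum>m<K. \<bar>F (b m) - F (a m)\<bar>) \<le> sum g {..<2 * K + 1}" .
  have mem: "(x, 2 * K + 1) \<in> {(x, n). x 0 = 0 \<and> x n = 1 \<and> (\<forall>i<n. x i \<le> x (Suc i))}"
    using x0 xn mono by simp
  show ?thesis unfolding total_variation_def
    by (rule SUP_upper2[OF mem]) (use le in \<open>simp add: g_def\<close>)
qed

lemma F_at:
  assumes s2: "2 \<le> s" and hs: "strict_mono_on {0..1} hs" "hs ` {0..1} = {0..1}"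
    and d: "\<And>n. \<alpha> n < s"
  shows "f_map s A1 hs h2 (hs (sadic_value s \<alpha>)) = h2 (sadic_value 2 (beta_seq A1 \<alpha>))"
proof -
  have inj: "inj_on hs {0..1}" using hs(1) by (rule strict_mono_on_imp_inj_on)
  have v: "sadic_value s \<alpha> \<in> {0..1}" using val_bounds[OF s2 d] by simp
  hence x: "hs (sadic_value s \<alpha>) \<in> {0..1}" using hs(2) by blast
  have "the_inv_into {0..1} hs (hs (sadic_value s \<alpha>)) = sadic_value s \<alpha>"
    by (rule the_inv_into_f_f[OF inj v])
  thus ?thesis using f_eq[OF s2 hs x, of A1 h2] g_eq[OF s2, of \<alpha> A1] d by simp
qed

lemma mono_on01:
  fixes hs :: "real \<Rightarrow> real" and u v :: real
  assumes "strict_mono_on {0..1} hs" "u \<in> {0..1}" "v \<in> {0..1}" "u \<le> v"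
  shows "hs u \<le> hs v"
proof (cases "u = v")
  case False
  hence "u < v" using assms(4) by simp
  hence "hs u < hs v" using strict_mono_onD[OF assms(1)] assms(2,3) by blast
  thus ?thesis by simp
qed simp

theorem theorem4:
  fixes s :: nat and A0 A1 :: "nat set" and hs h2 :: "real \<Rightarrow> real"
  assumes "s > 2"
    and "A0 \<inter> A1 = {}" and "A0 \<union> A1 = {0..<s}"
    and "A0 \<noteq> {0..<s}" and "A1 \<noteq> {0..<s}"
    and "continuous_on {0..1} hs" and "strict_mono_on {0..1} hs" and "hs ` {0..1} = {0..1}"
    and "continuous_on {0..1} h2" and "strict_mono_on {0..1} h2" and "h2 ` {0..1} = {0..1}"
  shows "continuous_on {0..1} (f_map s A1 hs h2)
         \<and> total_variation (f_map s A1 hs h2) 0 1 = \<infinity>"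
proof -
  have s2: "2 \<le> s" and s3: "3 \<le> s" using assms(1) by auto
  obtain d1 where d1: "d1 < s" "d1 \<in> A1"
  proof -
    have "A0 \<subseteq> {0..<s}" using assms(3) by blast
    then obtain d where dd: "d \<in> {0..<s}" "d \<notin> A0" using assms(4) by blast
    hence "d \<in> A1" using assms(3) by blast
    thus ?thesis using that dd by simp
  qed
  obtain d0 where d0: "d0 < s" "d0 \<notin> A1"
  proof -
    have "A1 \<subseteq> {0..<s}" using assms(3) by blast
    then obtain d where "d \<in> {0..<s}" "d \<notin> A1" using assms(5) by blast
    thus ?thesis using that by auto
  qed
  show ?thesis
  proof
    show "continuous_on {0..1} (f_map s A1 hs h2)" by (rule f_cont[OF s2 assms(6,7,8,9)])
    show "total_variation (f_map s A1 hs h2) 0 1 = \<infinity>"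
    proof (rule ereal_top)
      fix B :: real
      obtain j where j: "2 * B < 2 ^ j" using real_arch_pow[of 2 "2 * B"] by auto
      obtain N where N1: "1 \<le> N" and NB: "2 ^ j / 2 \<le> (\<Sum>m<s^N. lam h2 N (Bidx s A1 N m))"
        using T_bound[OF assms(9,10,11) s3 d0 d1] by blast
      define F where "F = f_map s A1 hs h2"
      define t where "t m = (if m mod s = 0 then 1 else m mod s)" for m
      define a where "a m = hs (sadic_value s (alpha_cat s N m (\<lambda>_. 0)))" for m
      define b where "b m = hs (sadic_value s (alpha_cat s N m (\<lambda>_. t m)))" for m
      have sp: "0 < s" using s2 by simp
      have ts: "t m < s" "1 \<le> t m" for m unfolding t_def using s3 by auto
      have rs: "real s - 1 > 0" using s2 by simp
      have pp: "real s ^ N > 0" using s2 by simp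
      have va: "sadic_value s (alpha_cat s N m (\<lambda>_. 0)) = real m / real s ^ N" if "m < s ^ N" for m
        using val_cat[OF s2 _ that, of "\<lambda>_. 0"] val_const[OF s2, of 0] sp by simp
      have vb: "sadic_value s (alpha_cat s N m (\<lambda>_. t m)) = (real m + real (t m) / (real s - 1)) / real s ^ N"
        if "m < s ^ N" for m
        using val_cat[OF s2 _ that, of "\<lambda>_. t m"] val_const[OF s2, of "t m"] ts[of m] by simp
      have da: "\<And>n. alpha_cat s N m (\<lambda>_. 0) n < s" for m by (rule alpha_cat_digit[OF sp]) (use sp in simp)
      have db: "\<And>n. alpha_cat s N m (\<lambda>_. t m) n < s" for m by (rule alpha_cat_digit[OF sp]) (use ts in simp)
      have ia: "sadic_value s (alpha_cat s N m (\<lambda>_. 0)) \<in> {0..1}" for m using val_bounds[OF s2 da] by simp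
      have ib: "sadic_value s (alpha_cat s N m (\<lambda>_. t m)) \<in> {0..1}" for m using val_bounds[OF s2 db] by simp
      have a01: "a m \<in> {0..1}" for m unfolding a_def using ia assms(8) by blast
      have b01: "b m \<in> {0..1}" for m unfolding b_def using ib assms(8) by blast
      have ab: "a m \<le> b m" if "m < s ^ N" for m
      proof -
        have "real m / real s ^ N \<le> (real m + real (t m) / (real s - 1)) / real s ^ N"
          using rs pp by (intro divide_right_mono) auto
        hence "sadic_value s (alpha_cat s N m (\<lambda>_. 0)) \<le> sadic_value s (alpha_cat s N m (\<lambda>_. t m))"
          unfolding va[OF that] vb[OF that] .
        thus ?thesis unfolding a_def b_def by (rule mono_on01[OF assms(7) ia ib])
      qed
      have ba: "b m \<le> a (Suc m)" if "Suc m < s ^ N" for m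
      proof -
        have m: "m < s ^ N" using that by simp
        have "real (t m) \<le> real s - 1" using ts[of m] by linarith
        hence "real (t m) / (real s - 1) \<le> 1" using rs by simp
        hence "(real m + real (t m) / (real s - 1)) / real s ^ N \<le> real (Suc m) / real s ^ N"
          using pp by (intro divide_right_mono) auto
        hence "sadic_value s (alpha_cat s N m (\<lambda>_. t m)) \<le> sadic_value s (alpha_cat s N (Suc m) (\<lambda>_. 0))"
          unfolding va[OF that] vb[OF m] .
        thus ?thesis unfolding a_def b_def by (rule mono_on01[OF assms(7) ib ia])
      qed
      have df: "\<bar>F (b m) - F (a m)\<bar> = lam h2 N (Bidx s A1 N m)" if "m < s ^ N" for m
      proof -
        define p where "p = Bidx s A1 N m mod 2"
        have p1: "p \<le> 1" unfolding p_def by simp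
        have Fa: "F (a m) = h2 ((real (Bidx s A1 N m) + real (if 0 = m mod s then p else 1 - p)) / 2 ^ N)"
          unfolding F_def a_def p_def using F_at[OF s2 assms(7,8) da, of A1 h2] bval_cyl[OF N1, of A1 s m 0] by simp
        have Fb: "F (b m) = h2 ((real (Bidx s A1 N m) + real (if t m = m mod s then p else 1 - p)) / 2 ^ N)"
          unfolding F_def b_def p_def using F_at[OF s2 assms(7,8) db, of A1 h2] bval_cyl[OF N1, of A1 s m "t m"] by simp
        have ln: "0 \<le> lam h2 N (Bidx s A1 N m)" using lam_nonneg[OF assms(9,10,11) Bidx_lt] .
        have "(p = 0 \<or> p = 1)" using p1 by auto
        moreover have "(m mod s = 0 \<and> t m \<noteq> m mod s) \<or> (m mod s \<noteq> 0 \<and> t m = m mod s)" unfolding t_def by auto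
        ultimately show ?thesis unfolding Fa Fb using ln by (auto simp: lam_def add.commute abs_minus_commute)
      qed
      have "ereal (\<Sum>m<s^N. \<bar>F (b m) - F (a m)\<bar>) \<le> total_variation F 0 1"
        by (rule tv_lower) (use a01 b01 ab ba in auto)
      moreover have "(\<Sum>m<s^N. \<bar>F (b m) - F (a m)\<bar>) = (\<Sum>m<s^N. lam h2 N (Bidx s A1 N m))"
        using df by (intro sum.cong) auto
      ultimately have "ereal (\<Sum>m<s^N. lam h2 N (Bidx s A1 N m)) \<le> total_variation F 0 1" by simp
      moreover have "B \<le> (\<Sum>m<s^N. lam h2 N (Bidx s A1 N m))" using j NB by linarith
      ultimately show "ereal B \<le> total_variation (f_map s A1 hs h2) 0 1" unfolding F_def
        using order_trans ereal_less_eq(3) by blast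
    qed
  qed
qed

end
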